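(* Let $q$ be a prime power, $u,v$ non-zero in $\mathbb{F}_q$, and write $\mathrm{Rad}(q-1)=k\,p_1\cdots p_s$ with $k$ a divisor and $p_1,\ldots,p_s$ distinct primes. Let $\theta=\theta(k)$, $W=W(k)$, and let $\varepsilon$ be the number of zeros of $ux^2+v$ in $\mathbb{F}_q$. Then for each $i=1,\ldots,s$: (i) $|M_{p_ik,k}-\theta(p_i)M_{k,k}|\leq \theta^2\left(1-\frac{1}{p_i}\right)\{2\sqrt{q}(W^2-W)+\varepsilon W\}$; (ii) $|M_{k,p_ik}-\theta(p_i)M_{k,k}|\leq 2\left(1-\frac{1}{p_i}\right)\theta^2W^2\sqrt{q}$.
   Context: $\mathrm{Rad}(m)$ is the product of the distinct primes dividing $m$; $\theta(m)=\phi(m)/m$; $W(m)=2^{\omega(m)}$ with $\omega(m)$ the number of distinct prime divisors. For a divisor $e$ of $q-1$, a non-zero $a\in\mathbb{F}_q$ is $e$-free if $a=b^d$ with $b\in\mathbb{F}_q$, $d\mid e$ implies $d=1$. For divisors $e_1,e_2$ of $q-1$, $M_{e_1,e_2}$ is the number of non-zero $a\in\mathbb{F}_q$ such that $a$ is $e_1$-free and $ua+va^{-1}$ is (non-zero and) $e_2$-free. *)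

theory Defs
  imports "HOL-Computational_Algebra.Computational_Algebra" "HOL-Number_Theory.Number_Theory"
begin

definition Rad :: "nat \<Rightarrow> nat" where
  "Rad m = (\<Prod>p\<in>prime_factors m. p)"

definition theta :: "nat \<Rightarrow> real" where
  "theta m = real (totient m) / real m"

definition W :: "nat \<Rightarrow> nat" where
  "W m = 2 ^ card (prime_factors m)"

definition efree :: "nat \<Rightarrow> 'a::field \<Rightarrow> bool" where
  "efree e a \<longleftrightarrow> a \<noteq> 0 \<and> (\<forall>d b. d dvd e \<and> a = b ^ d \<longrightarrow> d = 1)"

definition Mcount :: "'a::{finite,field} \<Rightarrow> 'a \<Rightarrow> nat \<Rightarrow> nat \<Rightarrow> nat" where
  "Mcount u v e1 e2 = card {a::'a. a \<noteq> 0 \<and> efree e1 a \<and>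
      u * a + v * inverse a \<noteq> 0 \<and> efree e2 (u * a + v * inverse a)}"

end

theory Submission
  imports Defs "HOL-Algebra.Multiplicative_Group" "HOL-Analysis.Analysis"
begin


definition tring :: "'a::field ring" where
  "tring = \<lparr>carrier = UNIV, mult = (*), one = 1, zero = 0, add = (+)\<rparr>"

lemma tring_field: "field (tring::'a::field ring)"
proof -
  have "\<exists>y. x + y = 0" for x :: 'a
    using add.right_inverse by blast
  moreover have "x \<noteq> 0 \<Longrightarrow> \<exists>y. x * y = 1" for x :: 'a
    by (rule exI[of _ "inverse x"]) auto
  ultimately show ?thesis
    unfolding tring_def using add.right_inverse
    by unfold_locales (auto simp:algebra_simps Units_def)
qed

lemma tring_pow: "x [^]\<^bsub>(tring::'a::field ring)\<^esub> (n::nat) = x ^ n"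
  by (induct n) (simp_all add: tring_def nat_pow_def mult.commute)

lemma gen_exists:
  "\<exists>g::'a::{finite,field}. g \<noteq> 0 \<and> (\<forall>x. x \<noteq> 0 \<longrightarrow> (\<exists>i. x = g ^ i))"
proof -
  interpret field "tring::'a ring" by (rule tring_field)
  have "finite (carrier (tring::'a ring))" by simp
  from finite_field_mult_group_has_gen[OF this] obtain a where
    a: "a \<in> carrier (mult_of (tring::'a ring))"
     "carrier (mult_of (tring::'a ring)) = {a[^]\<^bsub>tring::'a ring\<^esub>i | i::nat . i \<in> UNIV}" by blast
  hence "a \<noteq> 0" "UNIV - {0} = {a ^ i | i::nat. True}"
    unfolding tring_pow by (auto simp: tring_def)
  thus ?thesis by blast
qed

lemma fermat_field:
  assumes "x \<noteq> (0::'a::{finite,field})"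
  shows "x ^ (CARD('a) - 1) = 1"
proof -
  interpret field "tring::'a ring" by (rule tring_field)
  interpret G: group "mult_of (tring::'a ring)" by (rule field_mult_group)
  have "x \<in> carrier (mult_of (tring::'a ring))" using assms by (simp add: tring_def)
  from G.pow_order_eq_1[OF this] have "x [^]\<^bsub>tring::'a ring\<^esub> (order (mult_of (tring::'a ring))) = 1"
    by (simp add: nat_pow_mult_of tring_def)
  moreover have "order (mult_of (tring::'a ring)) = CARD('a) - 1"
    by (simp add: order_mult_of order_def tring_def)
  ultimately show ?thesis by (simp add: tring_pow)
qed

definition gen :: "'a::{finite,field}" where
  "gen = (SOME g. g \<noteq> 0 \<and> (\<forall>x. x \<noteq> 0 \<longrightarrow> (\<exists>i. x = g ^ i)))"

lemma gen: "(gen::'a::{finite,field}) \<noteq> 0" "\<forall>x::'a. x \<noteq> 0 \<longrightarrow> (\<exists>i. x = gen ^ i)"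
  using someI_ex[OF gen_exists] unfolding gen_def[symmetric] by auto

lemma card_ge2: "CARD('a::{finite,field}) \<ge> 2"
proof -
  have "card {0::'a, 1} \<le> CARD('a)" by (rule card_mono) auto
  thus ?thesis by simp
qed

lemma gen_pow_mod: "(gen::'a::{finite,field}) ^ i = gen ^ (i mod (CARD('a) - 1))"
proof -
  have "gen ^ i = (gen::'a) ^ ((CARD('a) - 1) * (i div (CARD('a) - 1)) + i mod (CARD('a) - 1))"
    by (simp only: mult_div_mod_eq)
  also have "\<dots> = gen ^ (i mod (CARD('a) - 1))"
  proof -
    have f: "(gen::'a) ^ (CARD('a) - 1) = 1" by (rule fermat_field[OF gen(1)])
    have "(gen::'a) ^ ((CARD('a) - 1) * (i div (CARD('a) - 1)) + i mod (CARD('a) - 1))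
       = (gen ^ (CARD('a) - 1)) ^ (i div (CARD('a) - 1)) * gen ^ (i mod (CARD('a) - 1))"
      by (simp only: power_add power_mult)
    thus ?thesis unfolding f by (simp only: power_one mult_1)
  qed
  finally show ?thesis .
qed

lemma gen_image: "(\<lambda>i. (gen::'a::{finite,field}) ^ i) ` {..<CARD('a) - 1} = UNIV - {0}"
proof
  show "(\<lambda>i. (gen::'a) ^ i) ` {..<CARD('a) - 1} \<subseteq> UNIV - {0}" using gen by auto
  show "UNIV - {0} \<subseteq> (\<lambda>i. (gen::'a) ^ i) ` {..<CARD('a) - 1}"
  proof
    fix x :: 'a assume "x \<in> UNIV - {0}"
    then obtain i where "x = gen ^ i" using gen by auto
    hence "x = gen ^ (i mod (CARD('a) - 1))" using gen_pow_mod by metis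
    moreover have "i mod (CARD('a) - 1) < CARD('a) - 1" using card_ge2[where 'a='a] by simp
    ultimately show "x \<in> (\<lambda>i. (gen::'a) ^ i) ` {..<CARD('a) - 1}" by blast
  qed
qed

lemma gen_inj: "inj_on (\<lambda>i. (gen::'a::{finite,field}) ^ i) {..<CARD('a) - 1}"
proof (rule eq_card_imp_inj_on)
  show "card ((\<lambda>i. (gen::'a) ^ i) ` {..<CARD('a) - 1}) = card {..<CARD('a) - 1}"
    unfolding gen_image by (simp add: card_Diff_singleton)
qed simp

lemma gen_pow_eq: "(gen::'a::{finite,field}) ^ a = gen ^ b \<Longrightarrow> a mod (CARD('a) - 1) = b mod (CARD('a) - 1)"
proof -
  assume "(gen::'a) ^ a = gen ^ b"
  hence "(gen::'a) ^ (a mod (CARD('a) - 1)) = gen ^ (b mod (CARD('a) - 1))" using gen_pow_mod by metis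
  moreover have "a mod (CARD('a) - 1) < CARD('a) - 1" "b mod (CARD('a) - 1) < CARD('a) - 1"
    using card_ge2[where 'a='a] by simp_all
  ultimately show ?thesis using gen_inj[where 'a='a] unfolding inj_on_def by blast
qed

definition ind :: "'a::{finite,field} \<Rightarrow> nat" where
  "ind x = (SOME i. x = gen ^ i)"

lemma ind: "(x::'a::{finite,field}) \<noteq> 0 \<Longrightarrow> x = gen ^ ind x"
  unfolding ind_def using gen by (metis (mono_tags) someI_ex)

lemma ind_mult:
  assumes "(x::'a::{finite,field}) \<noteq> 0" "y \<noteq> 0"
  shows "ind (x * y) mod (CARD('a) - 1) = (ind x + ind y) mod (CARD('a) - 1)"
proof -
  have "x * y \<noteq> 0" using assms by simp
  have "gen ^ ind (x * y) = x * y" using ind[OF \<open>x * y \<noteq> 0\<close>] by metis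
  also have "\<dots> = gen ^ ind x * gen ^ ind y" using ind[OF assms(1)] ind[OF assms(2)] by metis
  also have "\<dots> = (gen::'a) ^ (ind x + ind y)" by (rule power_add[symmetric])
  finally show ?thesis by (rule gen_pow_eq)
qed

lemma rth_power_iff:
  assumes "r dvd (CARD('a) - 1)" "(x::'a::{finite,field}) \<noteq> 0"
  shows "(\<exists>b. x = b ^ r) \<longleftrightarrow> r dvd ind x"
proof
  assume "\<exists>b. x = b ^ r"
  then obtain b where b: "x = b ^ r" by blast
  have "r \<noteq> 0"
  proof
    assume "r = 0"
    with assms(1) have "CARD('a) - 1 = 0" by simp
    with card_ge2[where 'a='a] show False by simp
  qed
  have "b \<noteq> 0"
  proof
    assume "b = 0"
    hence "x = 0" using b \<open>r \<noteq> 0\<close> by simp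
    thus False using assms(2) by simp
  qed
  have "gen ^ ind x = x" using ind[OF assms(2)] by metis
  also have "\<dots> = (gen ^ ind b) ^ r" using b ind[OF \<open>b \<noteq> 0\<close>] by metis
  also have "\<dots> = (gen::'a) ^ (ind b * r)" by (rule power_mult[symmetric])
  finally have "ind x mod (CARD('a) - 1) = (ind b * r) mod (CARD('a) - 1)" by (rule gen_pow_eq)
  hence "ind x mod r = (ind b * r) mod r" using assms(1) by (metis mod_mod_cancel)
  thus "r dvd ind x" by (simp add: mod_eq_0_iff_dvd)
next
  assume "r dvd ind x"
  then obtain m where m: "ind x = r * m" by blast
  have "x = gen ^ ind x" using ind[OF assms(2)] .
  also have "\<dots> = (gen ^ m) ^ r" unfolding m by (metis power_mult mult.commute)
  finally show "\<exists>b. x = b ^ r" by blast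
qed

lemma ind_gen: "ind (gen::'a::{finite,field}) mod (CARD('a) - 1) = 1 mod (CARD('a) - 1)"
proof -
  have "(gen::'a) = gen ^ ind (gen::'a)" using gen(1) by (rule ind)
  from this[symmetric] have "gen ^ ind (gen::'a) = (gen::'a) ^ 1" by (simp only: power_one_right)
  thus ?thesis by (rule gen_pow_eq)
qed



definition is_char :: "('a::field \<Rightarrow> complex) \<Rightarrow> bool" where
  "is_char \<phi> \<longleftrightarrow> \<phi> 0 = 0 \<and> (\<forall>x y. \<phi> (x*y) = \<phi> x * \<phi> y) \<and> (\<forall>x. x \<noteq> 0 \<longrightarrow> \<phi> x \<noteq> 0)"

definition ntriv :: "('a::field \<Rightarrow> complex) \<Rightarrow> bool" where
  "ntriv \<phi> \<longleftrightarrow> (\<exists>y. y \<noteq> 0 \<and> \<phi> y \<noteq> 1)"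

definition chi0 :: "'a::field \<Rightarrow> complex" where
  "chi0 x = (if x = 0 then 0 else 1)"

lemma is_charD:
  assumes "is_char \<phi>"
  shows "\<phi> 0 = 0" "\<phi> (x*y) = \<phi> x * \<phi> y" "x \<noteq> 0 \<Longrightarrow> \<phi> x \<noteq> 0"
  using assms unfolding is_char_def by auto

lemma char_one: assumes "is_char \<phi>" shows "\<phi> 1 = 1"
proof -
  have "\<phi> 1 = \<phi> 1 * \<phi> 1" using is_charD(2)[OF assms, of 1 1] by simp
  moreover have "\<phi> 1 \<noteq> 0" using is_charD(3)[OF assms, of 1] by simp
  ultimately show ?thesis by (metis mult_cancel_left2)
qed

lemma char_power: assumes "is_char \<phi>" shows "\<phi> (x ^ m) = \<phi> x ^ m"
  by (induct m) (simp_all add: char_one[OF assms] is_charD(2)[OF assms])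

lemma char_pow_one:
  assumes "is_char \<phi>" "(x::'a::{finite,field}) \<noteq> 0"
  shows "\<phi> x ^ (CARD('a) - 1) = 1"
  using char_power[OF assms(1), of x "CARD('a) - 1"] fermat_field[OF assms(2)] char_one[OF assms(1)]
  by simp

lemma char_norm:
  assumes "is_char \<phi>" "(x::'a::{finite,field}) \<noteq> 0"
  shows "norm (\<phi> x) = 1"
proof -
  have "norm (\<phi> x) ^ (CARD('a) - 1) = 1"
    using char_pow_one[OF assms] by (metis norm_power norm_one)
  moreover have "CARD('a) - 1 \<noteq> 0" using card_ge2[where 'a='a] by simp
  ultimately show ?thesis by (metis abs_norm_cancel power_eq_1_iff real_norm_def)
qed

lemma char_norm_le:
  assumes "is_char \<phi>"
  shows "norm (\<phi> (x::'a::{finite,field})) \<le> 1"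
  using char_norm[OF assms, of x] is_charD(1)[OF assms] by (cases "x = 0") auto

lemma char_cnj:
  assumes "is_char \<phi>" "(x::'a::{finite,field}) \<noteq> 0"
  shows "cnj (\<phi> x) * \<phi> x = 1"
proof -
  have "\<phi> x * cnj (\<phi> x) = complex_of_real ((norm (\<phi> x))^2)" by (rule complex_norm_square[symmetric])
  thus ?thesis using char_norm[OF assms] by (simp add: mult.commute)
qed

lemma char_inverse:
  assumes "is_char \<phi>" "(x::'a::{finite,field}) \<noteq> 0"
  shows "\<phi> (inverse x) = cnj (\<phi> x)"
proof -
  have "\<phi> (inverse x) * \<phi> x = 1"
    using is_charD(2)[OF assms(1), of "inverse x" x] char_one[OF assms(1)] assms(2) by simp
  moreover have "cnj (\<phi> x) * \<phi> x = 1" by (rule char_cnj[OF assms])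
  moreover have "\<phi> x \<noteq> 0" using is_charD(3)[OF assms(1) assms(2)] .
  ultimately show ?thesis by (metis mult_cancel_right)
qed

lemma char_mult_is:
  assumes "is_char \<phi>" "is_char \<psi>"
  shows "is_char (\<lambda>x. \<phi> x * \<psi> x)"
  using assms unfolding is_char_def by (simp add: algebra_simps)

lemma char_pow_is:
  assumes "is_char \<phi>" "t > 0"
  shows "is_char (\<lambda>x. \<phi> x ^ t)"
  using assms unfolding is_char_def by (simp add: power_mult_distrib)

lemma chi0_is: "is_char chi0"
  unfolding is_char_def chi0_def by auto

lemma sum_ntriv:
  assumes "is_char \<phi>" "ntriv \<phi>"
  shows "(\<Sum>x\<in>(UNIV::'a::{finite,field} set). \<phi> x) = 0"
proof -
  obtain y :: 'a where y: "y \<noteq> 0" "\<phi> y \<noteq> 1" using assms(2) unfolding ntriv_def by blast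
  have "(\<Sum>x\<in>UNIV. \<phi> x) = (\<Sum>x\<in>UNIV. \<phi> (y * x))"
    by (rule sum.reindex_bij_witness[where j="\<lambda>x. inverse y * x" and i="\<lambda>x. y * x"])
       (use y in \<open>auto simp: field_simps\<close>)
  also have "\<dots> = \<phi> y * (\<Sum>x\<in>UNIV. \<phi> x)"
    by (simp add: is_charD(2)[OF assms(1)] sum_distrib_left)
  finally have "(\<phi> y - 1) * (\<Sum>x\<in>UNIV. \<phi> x) = 0" by (simp add: algebra_simps)
  thus ?thesis using y(2) by simp
qed

lemma root_coprime:
  fixes z :: complex
  assumes "z ^ a = 1" "z ^ b = 1" "coprime a b" "a \<noteq> 0"
  shows "z = 1"
proof -
  obtain x y where xy: "a * x = b * y + gcd a b" using bezout_nat[OF assms(4)] by blast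
  hence "a * x = b * y + 1" using assms(3) by simp
  hence "z ^ (a * x) = z ^ (b * y) * z" by (simp add: power_add)
  thus ?thesis using assms(1,2) by (simp add: power_mult)
qed

lemma ntriv_prod:
  assumes "is_char \<phi>" "\<forall>x. x \<noteq> 0 \<longrightarrow> \<phi> x ^ k = 1"
    and "\<forall>x. x \<noteq> 0 \<longrightarrow> \<psi> x ^ r = 1" "ntriv \<psi>"
    and "coprime (t * k) r" "t > 0" "k > 0"
  shows "ntriv (\<lambda>x. \<phi> x * \<psi> x ^ t)"
proof (rule ccontr)
  assume "\<not> ntriv (\<lambda>x. \<phi> x * \<psi> x ^ t)"
  hence A: "\<forall>x. x \<noteq> 0 \<longrightarrow> \<phi> x * \<psi> x ^ t = 1" unfolding ntriv_def by blast
  obtain y where y: "y \<noteq> 0" "\<psi> y \<noteq> 1" using assms(4) unfolding ntriv_def by blast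
  have "(\<phi> y * \<psi> y ^ t) ^ k = 1" using A y by simp
  hence "\<phi> y ^ k * \<psi> y ^ (t * k) = 1" by (simp add: power_mult_distrib power_mult)
  hence "\<psi> y ^ (t * k) = 1" using assms(2) y by simp
  hence "\<psi> y = 1" using root_coprime[OF _ _ assms(5)] assms(3,6,7) y by simp
  thus False using y by simp
qed



definition psi :: "nat \<Rightarrow> 'a::{finite,field} \<Rightarrow> complex" where
  "psi r x = (if x = 0 then 0 else exp (2 * of_real pi * \<i> * of_nat (ind x) / of_nat r))"

lemma psi_pow:
  assumes "x \<noteq> 0"
  shows "psi r x ^ t = exp (2 * of_real pi * \<i> * of_nat (ind x * t) / of_nat r)"
proof -
  have "psi r x ^ t = exp (2 * of_real pi * \<i> * of_nat (ind x) / of_nat r) ^ t"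
    using assms by (simp add: psi_def)
  also have "\<dots> = exp (of_nat t * (2 * of_real pi * \<i> * of_nat (ind x) / of_nat r))"
    by (rule exp_of_nat_mult[symmetric])
  also have "of_nat t * (2 * of_real pi * \<i> * of_nat (ind x) / of_nat r)
      = 2 * of_real pi * \<i> * of_nat (ind x * t) / (of_nat r :: complex)"
    by (simp add: field_simps)
  finally show ?thesis .
qed

lemma psi_is_char:
  assumes "r dvd (CARD('a::{finite,field}) - 1)" "r > 0"
  shows "is_char (psi r :: 'a \<Rightarrow> complex)"
  unfolding is_char_def
proof (intro conjI allI impI)
  show "psi r (0::'a) = 0" by (simp add: psi_def)
  show "psi r (x::'a) \<noteq> 0" if "x \<noteq> 0" for x using that by (simp add: psi_def)
  fix x y :: 'a
  show "psi r (x * y) = psi r x * psi r y"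
  proof (cases "x = 0 \<or> y = 0")
    case True thus ?thesis by (auto simp: psi_def)
  next
    case False
    hence nz: "x \<noteq> 0" "y \<noteq> 0" "x * y \<noteq> 0" by auto
    have "ind (x * y) mod (CARD('a) - 1) = (ind x + ind y) mod (CARD('a) - 1)"
      using ind_mult[OF nz(1,2)] .
    hence m: "ind (x * y) mod r = (ind x + ind y) mod r" using assms(1) by (metis mod_mod_cancel)
    have "psi r (x * y) = psi r (x*y) ^ 1" by simp
    also have "\<dots> = exp (2 * of_real pi * \<i> * of_nat (ind (x*y)) / of_nat r)"
      using psi_pow[OF nz(3), of r 1] by simp
    also have "\<dots> = exp (2 * of_real pi * \<i> * of_nat (ind x + ind y) / of_nat r)"
      using complex_root_unity_eq[of r "ind (x*y)" "ind x + ind y"] m assms(2) by simp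
    also have "\<dots> = exp (2 * of_real pi * \<i> * of_nat (ind x) / of_nat r)
                   * exp (2 * of_real pi * \<i> * of_nat (ind y) / of_nat r)"
      by (simp add: exp_add[symmetric] add_divide_distrib distrib_left)
    also have "\<dots> = psi r x * psi r y" using nz by (simp add: psi_def)
    finally show ?thesis .
  qed
qed

lemma psi_pow_r:
  assumes "x \<noteq> 0" "r > 0"
  shows "psi r x ^ r = 1"
  using psi_pow[OF assms(1), of r r] complex_root_unity_eq_1[of r "ind x * r"] assms(2) by simp

lemma psi_sum:
  assumes "r dvd (CARD('a::{finite,field}) - 1)" "r > 0" "(x::'a) \<noteq> 0"
  shows "(\<Sum>t<r. psi r x ^ t) = (if \<exists>b. x = b ^ r then of_nat r else 0)"
proof (cases "r dvd ind x")
  case True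
  have "psi r x = psi r x ^ 1" by simp
  also have "\<dots> = 1" using psi_pow[OF assms(3), of r 1] complex_root_unity_eq_1[of r "ind x"] True assms(2)
    by simp
  finally show ?thesis using rth_power_iff[OF assms(1,3)] True by simp
next
  case False
  have "psi r x = psi r x ^ 1" by simp
  also have "\<dots> \<noteq> 1" using psi_pow[OF assms(3), of r 1] complex_root_unity_eq_1[of r "ind x"] False assms(2)
    by simp
  finally have ne: "psi r x \<noteq> 1" .
  have "(\<Sum>t<r. psi r x ^ t) = (1 - psi r x ^ r) / (1 - psi r x)"
    using sum_gp_strict[of "psi r x" r] ne by simp
  also have "\<dots> = 0" using psi_pow_r[OF assms(3,2)] by simp
  finally show ?thesis using rth_power_iff[OF assms(1,3)] False by simp
qed

lemma psi_ntriv: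
  assumes "r dvd (CARD('a::{finite,field}) - 1)" "prime r"
  shows "ntriv (psi r :: 'a \<Rightarrow> complex)"
proof -
  have r: "r > 1" using assms(2) prime_gt_1_nat by blast
  have "CARD('a) - 1 > 0" using card_ge2[where 'a='a] by simp
  hence "r \<le> CARD('a) - 1" using assms(1) dvd_imp_le by blast
  hence "1 mod (CARD('a) - 1) = 1" using r by simp
  hence "ind (gen::'a) mod (CARD('a) - 1) = 1" using ind_gen[where 'a='a] by simp
  hence "ind (gen::'a) mod r = 1 mod r" using assms(1) by (metis mod_mod_cancel)
  hence "\<not> r dvd ind (gen::'a)" using r by (simp add: dvd_eq_mod_eq_0)
  hence "exp (2 * of_real pi * \<i> * of_nat (ind (gen::'a)) / of_nat r) \<noteq> 1"
    using complex_root_unity_eq_1[of r "ind (gen::'a)"] r by simp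
  hence "psi r (gen::'a) \<noteq> 1" using gen(1) unfolding psi_def by simp
  thus ?thesis unfolding ntriv_def using gen(1) by blast
qed



lemma sum_shift:
  fixes G :: "'a::{finite,field} \<Rightarrow> complex"
  shows "(\<Sum>w\<in>UNIV. G (c + w)) = (\<Sum>s\<in>UNIV. G s)"
  by (rule sum.reindex_bij_witness[where j="\<lambda>w. c + w" and i="\<lambda>s. s - c"]) auto

lemma sum_inv_scale:
  fixes G :: "'a::{finite,field} \<Rightarrow> complex"
  assumes "e \<noteq> 0"
  shows "(\<Sum>z\<in>UNIV. G (e * inverse z)) = (\<Sum>w\<in>UNIV. G w)"
  by (rule sum.reindex_bij_witness[where j="\<lambda>z. e * inverse z" and i="\<lambda>w. e * inverse w"])
     (use assms in \<open>auto simp: field_simps\<close>)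

lemma sum_chi0: "(\<Sum>z\<in>(UNIV::'a::{finite,field} set). chi0 z) = of_nat (CARD('a) - 1)"
proof -
  have "(\<Sum>z\<in>(UNIV::'a set). chi0 z) = (\<Sum>z\<in>UNIV - {0::'a}. 1)"
    by (rule sum.mono_neutral_cong_right) (auto simp: chi0_def)
  also have "\<dots> = of_nat (CARD('a) - 1)" by (simp add: card_Diff_singleton)
  finally show ?thesis .
qed

lemma char_cnj_self:
  assumes "is_char \<beta>"
  shows "\<beta> z * cnj (\<beta> (z::'a::{finite,field})) = chi0 z"
proof (cases "z = 0")
  case True thus ?thesis using is_charD(1)[OF assms] by (simp add: chi0_def)
next
  case False thus ?thesis using char_cnj[OF assms False] by (simp add: chi0_def mult.commute)
qed

lemma K_lemma:
  fixes a b v :: "'a::{finite,field}"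
  assumes ch: "is_char \<beta>" and nt: "ntriv \<beta>" and a: "a \<noteq> 0" and b: "b \<noteq> 0" and v: "v \<noteq> 0"
  shows "(\<Sum>u\<in>UNIV. \<beta> (u*a + v * inverse a) * cnj (\<beta> (u*b + v * inverse b)))
       = (if b^2 = a^2 then of_nat (CARD('a)) else 0) * \<beta> a * cnj (\<beta> b) - \<beta> a * cnj (\<beta> b)"
proof -
  define c where "c = b * inverse a"
  define e where "e = v * inverse b - v * b * inverse (a^2)"
  have c0: "c \<noteq> 0" using a b by (simp add: c_def)
  have "(\<Sum>u\<in>UNIV. \<beta> (u*a + v * inverse a) * cnj (\<beta> (u*b + v * inverse b)))
      = (\<Sum>z\<in>UNIV. \<beta> z * cnj (\<beta> (c * z + e)))"
  proof (rule sum.reindex_bij_witness[where j="\<lambda>u. u*a + v * inverse a" and i="\<lambda>z. (z - v * inverse a)*inverse a"])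
    fix u :: 'a
    have "c * (u * a + v * inverse a) + e = u*b + v * inverse b"
      using a b unfolding c_def e_def by (simp add: field_simps power2_eq_square)
    thus "\<beta> (u * a + v * inverse a) * cnj (\<beta> (c * (u * a + v * inverse a) + e)) =
         \<beta> (u * a + v * inverse a) * cnj (\<beta> (u * b + v * inverse b))" by simp
  qed (use a in \<open>auto simp: field_simps\<close>)
  also have "\<dots> = (if b^2 = a^2 then of_nat (CARD('a)) else 0) * \<beta> a * cnj (\<beta> b) - \<beta> a * cnj (\<beta> b)"
  proof (cases "b^2 = a^2")
    case True
    hence e0: "e = 0" using a b unfolding e_def by (simp add: field_simps power2_eq_square)
    have cc: "cnj (\<beta> c) = \<beta> a * cnj (\<beta> b)"
      using is_charD(2)[OF ch, of b "inverse a"] char_inverse[OF ch a] unfolding c_def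
      by (simp add: mult.commute)
    have "(\<Sum>z\<in>UNIV. \<beta> z * cnj (\<beta> (c * z + e))) = (\<Sum>z\<in>(UNIV::'a set). chi0 z * cnj (\<beta> c))"
    proof (rule sum.cong)
      fix z :: 'a
      have "\<beta> z * cnj (\<beta> (c * z + e)) = (\<beta> z * cnj (\<beta> z)) * cnj (\<beta> c)"
        unfolding e0 using is_charD(2)[OF ch, of c z] by (simp add: mult.commute mult.left_commute)
      thus "\<beta> z * cnj (\<beta> (c * z + e)) = chi0 z * cnj (\<beta> c)" using char_cnj_self[OF ch, of z] by simp
    qed simp
    also have "\<dots> = of_nat (CARD('a) - 1) * cnj (\<beta> c)" by (simp add: sum_distrib_right[symmetric] sum_chi0)
    also have "\<dots> = (of_nat (CARD('a)) - 1) * (\<beta> a * cnj (\<beta> b))"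
      using card_ge2[where 'a='a] cc by (simp add: of_nat_diff)
    finally show ?thesis using True by (simp add: algebra_simps)
  next
    case False
    have e0: "e \<noteq> 0"
    proof
      assume "e = 0"
      hence "v * inverse b = v * b * inverse (a^2)" unfolding e_def by simp
      hence "a^2 = b^2" using a b v by (simp add: field_simps power2_eq_square)
      thus False using False by simp
    qed
    have "(\<Sum>z\<in>UNIV. \<beta> z * cnj (\<beta> (c * z + e)))
        = (\<Sum>z\<in>UNIV. (if e * inverse z = 0 then 0 else cnj (\<beta> (c + e * inverse z))))"
    proof (rule sum.cong)
      fix z :: 'a
      show "\<beta> z * cnj (\<beta> (c * z + e)) = (if e * inverse z = 0 then 0 else cnj (\<beta> (c + e * inverse z)))"
      proof (cases "z = 0")
        case True thus ?thesis using is_charD(1)[OF ch] by simp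
      next
        case False
        have "c * z + e = z * (c + e * inverse z)" using False by (simp add: field_simps)
        hence "\<beta> (c * z + e) = \<beta> z * \<beta> (c + e * inverse z)" using is_charD(2)[OF ch] by simp
        hence "\<beta> z * cnj (\<beta> (c * z + e)) = (cnj (\<beta> z) * \<beta> z) * cnj (\<beta> (c + e * inverse z))"
          by (simp add: mult.commute mult.left_commute)
        thus ?thesis using char_cnj[OF ch False] False e0 by simp
      qed
    qed simp
    also have "\<dots> = (\<Sum>w\<in>UNIV. (if w = 0 then 0 else cnj (\<beta> (c + w))))"
      by (rule sum_inv_scale[OF e0, where G="\<lambda>w. if w = 0 then 0 else cnj (\<beta> (c + w))"])
    also have "\<dots> = (\<Sum>w\<in>UNIV. cnj (\<beta> (c + w))) - cnj (\<beta> c)"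
    proof -
      have "(\<Sum>w\<in>UNIV. cnj (\<beta> (c + w))) = (\<Sum>w\<in>UNIV. (if w = 0 then 0 else cnj (\<beta> (c + w)))) + cnj (\<beta> (c + 0))"
        by (subst sum.If_cases) (auto simp: sum.remove[of UNIV 0] Compl_eq_Diff_UNIV)
      thus ?thesis by simp
    qed
    also have "(\<Sum>w\<in>UNIV. cnj (\<beta> (c + w))) = cnj (\<Sum>s\<in>UNIV. \<beta> s)"
      using sum_shift[of "\<lambda>s. cnj (\<beta> s)" c] by simp
    also have "\<dots> = 0" using sum_ntriv[OF ch nt] by simp
    also have "cnj (\<beta> c) = \<beta> a * cnj (\<beta> b)"
      using is_charD(2)[OF ch, of b "inverse a"] char_inverse[OF ch a] unfolding c_def
      by (simp add: mult.commute)
    finally show ?thesis using False by simp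
  qed
  finally show ?thesis .
qed



definition Ssum :: "('a::{finite,field} \<Rightarrow> complex) \<Rightarrow> ('a \<Rightarrow> complex) \<Rightarrow> 'a \<Rightarrow> 'a \<Rightarrow> complex" where
  "Ssum \<alpha> \<beta> u v = (\<Sum>a\<in>UNIV. \<alpha> a * \<beta> (u * a + v * inverse a))"

lemma card_sq_le2: "card {b::'a::field. b^2 = a^2} \<le> 2"
proof -
  have "{b::'a. b^2 = a^2} \<subseteq> {a, -a}" by (auto simp: power2_eq_iff)
  hence "card {b::'a. b^2 = a^2} \<le> card {a, -a}" by (rule card_mono[rotated]) simp
  also have "\<dots> \<le> 2" by (simp add: card_insert_le_m1)
  finally show ?thesis .
qed

lemma X_bound:
  assumes "is_char \<gamma>"
  shows "norm (\<Sum>a\<in>UNIV. \<Sum>b\<in>UNIV. (if b^2 = a^2 then \<gamma> a * cnj (\<gamma> (b::'a::{finite,field})) else 0))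
         \<le> 2 * (real (CARD('a)) - 1)"
proof -
  have "norm (\<Sum>a\<in>UNIV. \<Sum>b\<in>UNIV. (if b^2 = a^2 then \<gamma> a * cnj (\<gamma> (b::'a)) else 0))
     \<le> (\<Sum>a\<in>UNIV. norm (\<Sum>b\<in>UNIV. (if b^2 = a^2 then \<gamma> a * cnj (\<gamma> (b::'a)) else 0)))"
    by (rule norm_sum)
  also have "\<dots> \<le> (\<Sum>a\<in>UNIV. 2 * Re (chi0 (a::'a)))"
  proof (rule sum_mono)
    fix a :: 'a
    have "norm (\<Sum>b\<in>UNIV. (if b^2 = a^2 then \<gamma> a * cnj (\<gamma> (b::'a)) else 0))
        \<le> (\<Sum>b\<in>UNIV. norm (if b^2 = a^2 then \<gamma> a * cnj (\<gamma> (b::'a)) else 0))" by (rule norm_sum)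
    also have "\<dots> \<le> (\<Sum>b\<in>UNIV. (if b^2 = a^2 then Re (chi0 a) else 0))"
    proof (rule sum_mono)
      fix b :: 'a
      have "norm (\<gamma> a * cnj (\<gamma> b)) \<le> Re (chi0 a)"
      proof (cases "a = 0")
        case True thus ?thesis using is_charD(1)[OF assms] by (simp add: chi0_def)
      next
        case False
        have "norm (\<gamma> a * cnj (\<gamma> b)) = norm (\<gamma> b)" using char_norm[OF assms False] by (simp add: norm_mult)
        also have "\<dots> \<le> 1" by (rule char_norm_le[OF assms])
        finally show ?thesis using False by (simp add: chi0_def)
      qed
      thus "norm (if b^2 = a^2 then \<gamma> a * cnj (\<gamma> b) else 0) \<le> (if b^2 = a^2 then Re (chi0 a) else 0)"
        by simp
    qed
    also have "\<dots> = real (card {b::'a. b^2 = a^2}) * Re (chi0 a)"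
      by (simp add: sum.If_cases)
    also have "\<dots> \<le> 2 * Re (chi0 a)"
      using card_sq_le2[of a] by (intro mult_right_mono) (auto simp: chi0_def)
    finally show "norm (\<Sum>b\<in>UNIV. (if b^2 = a^2 then \<gamma> a * cnj (\<gamma> (b::'a)) else 0)) \<le> 2 * Re (chi0 a)" .
  qed
  also have "\<dots> = 2 * Re (\<Sum>a\<in>UNIV. chi0 (a::'a))" by (simp add: sum_distrib_left)
  also have "\<dots> = 2 * (real (CARD('a)) - 1)" using card_ge2[where 'a='a] by (simp add: sum_chi0 of_nat_diff)
  finally show ?thesis .
qed

lemma second_moment:
  fixes v :: "'a::{finite,field}"
  assumes al: "is_char \<alpha>" and be: "is_char \<beta>" and nt: "ntriv \<beta>" and v: "v \<noteq> 0"
  shows "(\<Sum>u\<in>UNIV. (norm (Ssum \<alpha> \<beta> u v))^2) \<le> 2 * real (CARD('a)) * (real (CARD('a)) - 1)"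
proof -
  define q where "q = CARD('a)"
  define \<gamma> where "\<gamma> = (\<lambda>x. \<alpha> x * \<beta> x)"
  have ga: "is_char \<gamma>" unfolding \<gamma>_def by (rule char_mult_is[OF al be])
  define K where "K = (\<lambda>a b. (\<Sum>u\<in>UNIV. \<beta> (u*a + v * inverse a) * cnj (\<beta> (u*b + v * inverse b))))"
  define X where "X = (\<Sum>a\<in>UNIV. \<Sum>b\<in>UNIV. (if b^2 = a^2 then \<gamma> a * cnj (\<gamma> (b::'a)) else 0))"
  define G where "G = (\<Sum>a\<in>UNIV. \<gamma> (a::'a))"
  have 1: "complex_of_real (\<Sum>u\<in>UNIV. (norm (Ssum \<alpha> \<beta> u v))^2)
        = (\<Sum>u\<in>UNIV. Ssum \<alpha> \<beta> u v * cnj (Ssum \<alpha> \<beta> u v))"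
    by (subst of_real_sum) (rule sum.cong[OF refl], rule complex_norm_square)
  have 2: "Ssum \<alpha> \<beta> u v * cnj (Ssum \<alpha> \<beta> u v)
     = (\<Sum>a\<in>UNIV. \<Sum>b\<in>UNIV. \<alpha> a * cnj (\<alpha> b) * (\<beta> (u*a + v * inverse a) * cnj (\<beta> (u*b + v * inverse b))))" for u
    unfolding Ssum_def cnj_sum sum_product by (simp add: mult_ac)
  have 3: "(\<Sum>u\<in>UNIV. Ssum \<alpha> \<beta> u v * cnj (Ssum \<alpha> \<beta> u v))
      = (\<Sum>a\<in>UNIV. \<Sum>b\<in>UNIV. \<alpha> a * cnj (\<alpha> b) * K a b)"
    unfolding 2 K_def sum_distrib_left
    by (subst sum.swap) (subst (2) sum.swap, rule refl)
  have 4: "\<alpha> a * cnj (\<alpha> b) * K a b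
     = of_nat q * (if b^2 = a^2 then \<gamma> a * cnj (\<gamma> b) else 0) - \<gamma> a * cnj (\<gamma> b)" for a b
  proof (cases "a = 0 \<or> b = 0")
    case True thus ?thesis using is_charD(1)[OF al] is_charD(1)[OF be] unfolding \<gamma>_def by auto
  next
    case False
    hence Keq: "K a b = (if b^2 = a^2 then of_nat q else 0) * \<beta> a * cnj (\<beta> b) - \<beta> a * cnj (\<beta> b)"
      unfolding K_def q_def using K_lemma[OF be nt _ _ v, of a b] by simp
    show ?thesis unfolding \<gamma>_def Keq by (cases "b^2 = a^2") (simp_all add: algebra_simps)
  qed
  have 5: "(\<Sum>a\<in>UNIV. \<Sum>b\<in>UNIV. \<alpha> a * cnj (\<alpha> b) * K a b) = of_nat q * X - G * cnj G"
  proof -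
    have 5: "(\<Sum>a\<in>UNIV. \<Sum>b\<in>UNIV. \<gamma> a * cnj (\<gamma> (b::'a))) = G * cnj G"
      unfolding G_def cnj_sum sum_product ..
    show ?thesis unfolding 4 sum_subtractf 5 X_def sum_distrib_left ..
  qed
  have "complex_of_real (\<Sum>u\<in>UNIV. (norm (Ssum \<alpha> \<beta> u v))^2) = of_nat q * X - G * cnj G"
    using 1 3 5 by simp
  hence "(\<Sum>u\<in>UNIV. (norm (Ssum \<alpha> \<beta> u v))^2) = Re (of_nat q * X - G * cnj G)"
    by (metis Re_complex_of_real)
  also have "\<dots> = real q * Re X - (norm G)^2"
    by (simp add: complex_norm_square[symmetric] del: of_real_power)
  also have "\<dots> \<le> real q * norm X" 
  proof -
    have "Re X \<le> norm X" by (rule complex_Re_le_cmod)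
    hence "real q * Re X \<le> real q * norm X" by (rule mult_left_mono) simp
    thus ?thesis by (smt (verit) zero_le_power2)
  qed
  also have "\<dots> \<le> real q * (2 * (real q - 1))"
    unfolding X_def q_def by (intro mult_left_mono X_bound[OF ga]) auto
  finally show ?thesis unfolding q_def by (simp add: algebra_simps)
qed



lemma Ssum_scale:
  fixes u v c :: "'a::{finite,field}"
  assumes al: "is_char \<alpha>" and be: "is_char \<beta>" and c: "c \<noteq> 0"
  shows "Ssum \<alpha> \<beta> (u * c^2) v = \<alpha> (inverse c) * \<beta> c * Ssum \<alpha> \<beta> u v"
proof -
  have "Ssum \<alpha> \<beta> (u * c^2) v = (\<Sum>a\<in>UNIV. \<alpha> (a * inverse c) * \<beta> (c * (u * a + v * inverse a)))"
    unfolding Ssum_def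
  proof (rule sum.reindex_bij_witness[where j="\<lambda>a. c * a" and i="\<lambda>a. a * inverse c"])
    fix a :: 'a
    have h1: "c * (u * (c * a) + v * inverse (c * a)) = u * c\<^sup>2 * a + v * inverse a"
    proof (cases "a = 0")
      case True thus ?thesis by simp
    next
      case False
      have "c * (u * (c * a)) = u * c\<^sup>2 * a" by (simp add: power2_eq_square mult_ac)
      moreover have "c * (v * inverse (c * a)) = v * inverse a" using c False by (simp add: field_simps)
      ultimately show ?thesis by (simp only: distrib_left)
    qed
    have ca: "c * a * inverse c = a" using c by (simp add: field_simps)
    show "\<alpha> (c * a * inverse c) * \<beta> (c * (u * (c * a) + v * inverse (c * a))) = \<alpha> a * \<beta> (u * c\<^sup>2 * a + v * inverse a)"
      by (simp only: h1 ca)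
  qed (use c in \<open>simp_all\<close>)
  also have "\<dots> = (\<Sum>a\<in>UNIV. \<alpha> (inverse c) * \<beta> c * (\<alpha> a * \<beta> (u * a + v * inverse a)))"
    by (rule sum.cong[OF refl]) (simp add: is_charD(2)[OF al] is_charD(2)[OF be] mult_ac)
  also have "\<dots> = \<alpha> (inverse c) * \<beta> c * Ssum \<alpha> \<beta> u v"
    unfolding Ssum_def sum_distrib_left ..
  finally show ?thesis .
qed

lemma core_bound:
  fixes u v :: "'a::{finite,field}"
  assumes al: "is_char \<alpha>" and be: "is_char \<beta>" and nt: "ntriv \<beta>" and u: "u \<noteq> 0" and v: "v \<noteq> 0"
  shows "norm (Ssum \<alpha> \<beta> u v) \<le> 2 * sqrt (real (CARD('a)))"
proof -
  define f where "f = (\<lambda>c::'a. u * c^2)"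
  define Q where "Q = f ` (UNIV - {0})"
  have const: "norm (Ssum \<alpha> \<beta> y v) = norm (Ssum \<alpha> \<beta> u v)" if "y \<in> Q" for y
  proof -
    from that obtain c where c0: "c \<in> UNIV - {0}" and cy: "y = f c" unfolding Q_def by (rule imageE)
    have c: "c \<noteq> 0" "y = u * c^2" using c0 cy unfolding f_def by auto
    have eq: "Ssum \<alpha> \<beta> y v = \<alpha> (inverse c) * \<beta> c * Ssum \<alpha> \<beta> u v"
      unfolding c(2) by (rule Ssum_scale[OF al be c(1)])
    have n1: "norm (\<alpha> (inverse c)) = 1" using char_norm[OF al, of "inverse c"] c(1) by simp
    have n2: "norm (\<beta> c) = 1" using char_norm[OF be c(1)] .
    show ?thesis unfolding eq norm_mult n1 n2 by simp
  qed
  have cardQ: "CARD('a) - 1 \<le> 2 * card Q"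
  proof -
    have A: "(\<Sum>y\<in>Q. card {x. x \<in> UNIV - {0} \<and> f x = y}) = (\<Sum>y\<in>Q. \<Sum>x\<in>{x. x \<in> UNIV - {0} \<and> f x = y}. (1::nat))"
      by (rule sum.cong[OF refl], rule card_eq_sum)
    have B: "(\<Sum>y\<in>Q. \<Sum>x\<in>{x. x \<in> UNIV - {0} \<and> f x = y}. (1::nat)) = (\<Sum>x\<in>UNIV - {0::'a}. (1::nat))"
      by (rule sum.group) (auto simp: Q_def)
    have "card (UNIV - {0::'a}) = (\<Sum>y\<in>Q. card {x. x \<in> UNIV - {0} \<and> f x = y})"
      unfolding A B by (rule card_eq_sum)
    also have "\<dots> \<le> (\<Sum>y\<in>Q. 2)"
    proof (rule sum_mono)
      fix y assume "y \<in> Q"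
      then obtain c where c: "y = u * c^2" unfolding Q_def f_def by blast
      have "{x. x \<in> UNIV - {0} \<and> f x = y} \<subseteq> {b. b^2 = c^2}"
        using u unfolding c f_def by auto
      hence "card {x. x \<in> UNIV - {0} \<and> f x = y} \<le> card {b. b^2 = c^2}"
        by (rule card_mono[rotated]) simp
      also have "\<dots> \<le> 2" by (rule card_sq_le2)
      finally show "card {x. x \<in> UNIV - {0} \<and> f x = y} \<le> 2" .
    qed
    also have "\<dots> = 2 * card Q" by simp
    finally show ?thesis by (simp add: card_Diff_singleton)
  qed
  have Qpos: "card Q > 0" using cardQ card_ge2[where 'a='a] by linarith
  have "(\<Sum>y\<in>Q. (norm (Ssum \<alpha> \<beta> y v))^2) = (\<Sum>y\<in>Q. (norm (Ssum \<alpha> \<beta> u v))^2)"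
    by (rule sum.cong[OF refl]) (simp only: const)
  hence "real (card Q) * (norm (Ssum \<alpha> \<beta> u v))^2 = (\<Sum>y\<in>Q. (norm (Ssum \<alpha> \<beta> y v))^2)"
    by simp
  also have "\<dots> \<le> (\<Sum>y\<in>UNIV. (norm (Ssum \<alpha> \<beta> y v))^2)"
    by (rule sum_mono2) auto
  also have "\<dots> \<le> 2 * real (CARD('a)) * (real (CARD('a)) - 1)"
    by (rule second_moment[OF al be nt v])
  also have "\<dots> \<le> 2 * real (CARD('a)) * (2 * real (card Q))"
  proof -
    have "real (CARD('a)) - 1 \<le> 2 * real (card Q)" using cardQ card_ge2[where 'a='a] by linarith
    thus ?thesis by (intro mult_left_mono) auto
  qed
  finally have "real (card Q) * (norm (Ssum \<alpha> \<beta> u v))^2 \<le> real (card Q) * (4 * real (CARD('a)))"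
    by (simp add: algebra_simps)
  hence "(norm (Ssum \<alpha> \<beta> u v))^2 \<le> 4 * real (CARD('a))" using Qpos by simp
  hence "norm (Ssum \<alpha> \<beta> u v) \<le> sqrt (4 * real (CARD('a)))" by (simp add: real_le_rsqrt)
  also have "\<dots> = 2 * sqrt (real (CARD('a)))" by (simp add: real_sqrt_mult)
  finally show ?thesis .
qed



section \<open>e-free characterisation\<close>

lemma efree_iff:
  assumes "e > 0"
  shows "efree e (a::'a::field) \<longleftrightarrow> a \<noteq> 0 \<and> (\<forall>r. prime r \<and> r dvd e \<longrightarrow> \<not> (\<exists>b. a = b ^ r))"
proof
  assume H: "efree e a"
  hence a0: "a \<noteq> 0" unfolding efree_def by blast
  have "\<not> (\<exists>b. a = b ^ r)" if "prime r" "r dvd e" for r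
  proof
    assume "\<exists>b. a = b ^ r"
    then obtain b where "a = b ^ r" by blast
    hence "r = 1" using H that(2) unfolding efree_def by blast
    thus False using that(1) by simp
  qed
  thus "a \<noteq> 0 \<and> (\<forall>r. prime r \<and> r dvd e \<longrightarrow> \<not> (\<exists>b. a = b ^ r))" using a0 by blast
next
  assume H: "a \<noteq> 0 \<and> (\<forall>r. prime r \<and> r dvd e \<longrightarrow> \<not> (\<exists>b. a = b ^ r))"
  show "efree e a" unfolding efree_def
  proof (intro conjI)
    show "a \<noteq> 0" using H by blast
    show "\<forall>d b. d dvd e \<and> a = b ^ d \<longrightarrow> d = 1"
  proof (intro allI impI)
    fix d b assume db: "d dvd e \<and> a = b ^ d"
    show "d = 1"
    proof (rule ccontr)
      assume "d \<noteq> 1"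
      then obtain r where r: "prime r" "r dvd d" using prime_factor_nat by blast
      then obtain m where m: "d = r * m" by blast
      have "a = (b ^ m) ^ r" using db m by (simp add: power_mult[symmetric] mult.commute)
      moreover have "r dvd e" using r(2) db dvd_trans by blast
      ultimately show False using H r(1) by blast
    qed
  qed
  qed
qed

lemma efree_step:
  assumes "prime r" "k > 0"
  shows "efree (r * k) (a::'a::field) \<longleftrightarrow> efree k a \<and> \<not> (\<exists>b. a = b ^ r)"
proof -
  have rk: "r * k > 0" using assms prime_gt_0_nat by simp
  have key: "prime s \<Longrightarrow> s dvd r * k \<longleftrightarrow> s = r \<or> s dvd k" for s
    using prime_dvd_mult_iff[of s r k] primes_dvd_imp_eq[of s r] assms(1) by auto
  show ?thesis unfolding efree_iff[OF rk] efree_iff[OF assms(2)] using key assms(1) by blast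
qed

lemma efree_1: "efree 1 (a::'a::field) \<longleftrightarrow> a \<noteq> 0"
  using efree_iff[of 1 a] by auto

section \<open>Expansions into characters\<close>

definition vall :: "(complex \<times> ('a \<Rightarrow> complex)) list \<Rightarrow> 'a \<Rightarrow> complex" where
  "vall L x = (\<Sum>p\<leftarrow>L. fst p * snd p x)"

definition wtl :: "(complex \<times> ('a \<Rightarrow> complex)) list \<Rightarrow> real" where
  "wtl L = (\<Sum>p\<leftarrow>L. norm (fst p))"

definition exl :: "nat \<Rightarrow> (complex \<times> ('a::field \<Rightarrow> complex)) list \<Rightarrow> bool" where
  "exl k L \<longleftrightarrow> (\<forall>p\<in>set L. is_char (snd p) \<and> (\<forall>x. x \<noteq> 0 \<longrightarrow> snd p x ^ k = 1))"

definition ntl :: "(complex \<times> ('a::field \<Rightarrow> complex)) list \<Rightarrow> bool" where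
  "ntl L \<longleftrightarrow> (\<forall>p\<in>set L. ntriv (snd p))"

definition good :: "nat \<Rightarrow> ('a::field \<Rightarrow> complex) \<Rightarrow> real \<Rightarrow> bool" where
  "good k F w \<longleftrightarrow> (\<exists>L. exl k L \<and> ntl L \<and> (\<forall>x. F x = vall L x) \<and> wtl L \<le> w)"

lemma vall_simps [simp]:
  "vall [] x = 0" "vall (p # L) x = fst p * snd p x + vall L x" "vall (L1 @ L2) x = vall L1 x + vall L2 x"
  by (simp_all add: vall_def)

lemma wtl_simps [simp]:
  "wtl [] = 0" "wtl (p # L) = norm (fst p) + wtl L" "wtl (L1 @ L2) = wtl L1 + wtl L2"
  by (simp_all add: wtl_def)

lemma wtl_nonneg: "wtl L \<ge> 0"
  by (induct L) (simp_all add: add_nonneg_nonneg)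

lemma good_zero: "good k (\<lambda>x. 0) 0"
  unfolding good_def by (rule exI[of _ "[]"]) (simp add: exl_def ntl_def)

lemma good_single:
  assumes "is_char \<phi>" "\<forall>x. x \<noteq> 0 \<longrightarrow> \<phi> x ^ k = 1" "ntriv \<phi>"
  shows "good k (\<lambda>x. c * \<phi> x) (norm c)"
  unfolding good_def using assms
  by (intro exI[of _ "[(c, \<phi>)]"]) (simp add: exl_def ntl_def)

lemma good_add:
  assumes "good k F w1" "good k G w2"
  shows "good k (\<lambda>x. F x + G x) (w1 + w2)"
proof -
  obtain L1 where L1: "exl k L1" "ntl L1" "\<forall>x. F x = vall L1 x" "wtl L1 \<le> w1"
    using assms(1) unfolding good_def by blast
  obtain L2 where L2: "exl k L2" "ntl L2" "\<forall>x. G x = vall L2 x" "wtl L2 \<le> w2"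
    using assms(2) unfolding good_def by blast
  show ?thesis unfolding good_def
    by (rule exI[of _ "L1 @ L2"]) (use L1 L2 in \<open>auto simp: exl_def ntl_def\<close>)
qed

lemma vall_scale: "vall (map (\<lambda>p. (c * fst p, snd p)) L) x = c * vall L x"
  by (induct L) (simp_all add: algebra_simps)

lemma wtl_scale: "wtl (map (\<lambda>p. (c * fst p, snd p)) L) = norm c * wtl L"
  by (induct L) (simp_all add: algebra_simps norm_mult)

lemma good_scale:
  assumes "good k F w"
  shows "good k (\<lambda>x. c * F x) (norm c * w)"
proof -
  obtain L where L: "exl k L" "ntl L" "\<forall>x. F x = vall L x" "wtl L \<le> w"
    using assms unfolding good_def by blast
  show ?thesis unfolding good_def
  proof (rule exI[of _ "map (\<lambda>p. (c * fst p, snd p)) L"], intro conjI)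
    show "exl k (map (\<lambda>p. (c * fst p, snd p)) L)" using L(1) by (auto simp: exl_def)
    show "ntl (map (\<lambda>p. (c * fst p, snd p)) L)" using L(2) by (auto simp: ntl_def)
    show "\<forall>x. c * F x = vall (map (\<lambda>p. (c * fst p, snd p)) L) x" using L(3) by (simp add: vall_scale)
    show "wtl (map (\<lambda>p. (c * fst p, snd p)) L) \<le> norm c * w"
      unfolding wtl_scale using L(4) by (rule mult_left_mono) simp
  qed
qed

lemma good_sum:
  assumes "finite T" "\<forall>t\<in>T. good k (F t) (w t)"
  shows "good k (\<lambda>x. \<Sum>t\<in>T. F t x) (\<Sum>t\<in>T. w t)"
  using assms
proof (induct T rule: finite_induct)
  case empty thus ?case using good_zero by simp
next
  case (insert t T)
  have "good k (\<lambda>x. F t x + (\<Sum>t\<in>T. F t x)) (w t + (\<Sum>t\<in>T. w t))"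
    using insert by (intro good_add) auto
  thus ?case using insert by simp
qed

lemma good_mono:
  assumes "good m F w" "m dvd k" "w \<le> w'"
  shows "good k F w'"
proof -
  obtain L where L: "exl m L" "ntl L" "\<forall>x. F x = vall L x" "wtl L \<le> w"
    using assms(1) unfolding good_def by blast
  obtain j where j: "k = m * j" using assms(2) by blast
  have "exl k L" using L(1) unfolding exl_def j by (simp add: power_mult)
  thus ?thesis unfolding good_def using L assms(3) by (intro exI[of _ L]) auto
qed

lemma vall_mulpsi: "vall (map (\<lambda>p. (fst p, \<lambda>x. snd p x * g x)) L) x = vall L x * g x"
  by (induct L) (simp_all add: algebra_simps)

lemma wtl_mulpsi: "wtl (map (\<lambda>p. (fst p, \<lambda>x. snd p x * g x)) L) = wtl L"
  by (induct L) simp_all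

lemma good_mul_psi:
  assumes "good m F w" "prime r" "r dvd (CARD('a::{finite,field}) - 1)" "\<not> r dvd m" "m > 0" "0 < t" "t < r"
  shows "good (r * m) (\<lambda>x::'a. F x * psi r x ^ t) w"
proof -
  obtain L where L: "exl m L" "ntl L" "\<forall>x. F x = vall L x" "wtl L \<le> w"
    using assms(1) unfolding good_def by blast
  have r0: "r > 0" using assms(2) prime_gt_0_nat by blast
  have pc: "is_char (psi r :: 'a \<Rightarrow> complex)" by (rule psi_is_char[OF assms(3) r0])
  have pr: "\<forall>x::'a. x \<noteq> 0 \<longrightarrow> psi r x ^ r = 1" using psi_pow_r r0 by blast
  have pn: "ntriv (psi r :: 'a \<Rightarrow> complex)" by (rule psi_ntriv[OF assms(3,2)])
  have cop: "coprime (t * m) r"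
  proof -
    have "\<not> r dvd t" using assms(6,7) by (auto dest: dvd_imp_le)
    hence "\<not> r dvd t * m" using assms(4) assms(2) by (simp add: prime_dvd_mult_iff)
    hence "coprime r (t * m)" by (rule prime_imp_coprime[OF assms(2)])
    thus ?thesis by (metis coprime_commute)
  qed
  let ?L = "map (\<lambda>p. (fst p, \<lambda>x. snd p x * psi r x ^ t)) L"
  show ?thesis unfolding good_def
  proof (rule exI[of _ ?L], intro conjI)
    show "exl (r * m) ?L" unfolding exl_def
    proof
      fix p assume "p \<in> set ?L"
      then obtain p0 where p0: "p0 \<in> set L" "p = (fst p0, \<lambda>x. snd p0 x * psi r x ^ t)" by auto
      have c0: "is_char (snd p0)" "\<forall>x. x \<noteq> 0 \<longrightarrow> snd p0 x ^ m = 1" using L(1) p0(1) unfolding exl_def by auto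
      have "is_char (\<lambda>x. snd p0 x * psi r x ^ t)"
        by (rule char_mult_is[OF c0(1) char_pow_is[OF pc assms(6)]])
      moreover have "(snd p0 x * psi r x ^ t) ^ (r * m) = 1" if "x \<noteq> 0" for x
      proof -
        have "(snd p0 x * psi r x ^ t) ^ (r * m) = (snd p0 x ^ m) ^ r * (psi r x ^ r) ^ (t * m)"
          by (simp add: power_mult_distrib power_mult[symmetric] mult_ac)
        thus ?thesis using c0(2) pr that by simp
      qed
      ultimately show "is_char (snd p) \<and> (\<forall>x. x \<noteq> 0 \<longrightarrow> snd p x ^ (r * m) = 1)" using p0(2) by simp
    qed
    show "ntl ?L" unfolding ntl_def
    proof
      fix p assume "p \<in> set ?L"
      then obtain p0 where p0: "p0 \<in> set L" "p = (fst p0, \<lambda>x. snd p0 x * psi r x ^ t)" by auto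
      have c0: "is_char (snd p0)" "\<forall>x. x \<noteq> 0 \<longrightarrow> snd p0 x ^ m = 1" using L(1) p0(1) unfolding exl_def by auto
      show "ntriv (snd p)" unfolding p0(2) snd_conv
        by (rule ntriv_prod[OF c0 pr pn cop assms(6,5)])
    qed
    show "\<forall>x. F x * psi r x ^ t = vall ?L x" using L(3) by (simp add: vall_mulpsi)
    show "wtl ?L \<le> w" using L(4) by (simp add: wtl_mulpsi)
  qed
qed

lemma good_chi0_psi:
  assumes "prime r" "r dvd (CARD('a::{finite,field}) - 1)" "0 < t" "t < r"
  shows "good r (\<lambda>x::'a. chi0 x * psi r x ^ t) 1"
proof -
  have r0: "r > 0" using assms(1) prime_gt_0_nat by blast
  have pc: "is_char (psi r :: 'a \<Rightarrow> complex)" by (rule psi_is_char[OF assms(2) r0])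
  have pr: "\<forall>x::'a. x \<noteq> 0 \<longrightarrow> psi r x ^ r = 1" using psi_pow_r r0 by blast
  have pn: "ntriv (psi r :: 'a \<Rightarrow> complex)" by (rule psi_ntriv[OF assms(2,1)])
  have c1: "\<forall>x::'a. x \<noteq> 0 \<longrightarrow> chi0 x ^ 1 = 1" by (simp add: chi0_def)
  have cop: "coprime (t * 1) r"
  proof -
    have "\<not> r dvd t" using assms(3,4) by (auto dest: dvd_imp_le)
    hence "coprime r t" by (rule prime_imp_coprime[OF assms(1)])
    thus ?thesis by (metis coprime_commute mult_1_right)
  qed
  have ch: "is_char (\<lambda>x::'a. chi0 x * psi r x ^ t)"
    by (rule char_mult_is[OF chi0_is char_pow_is[OF pc assms(3)]])
  have pw: "\<forall>x::'a. x \<noteq> 0 \<longrightarrow> (chi0 x * psi r x ^ t) ^ r = 1"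
  proof (intro allI impI)
    fix x :: 'a assume x: "x \<noteq> 0"
    have "(chi0 x * psi r x ^ t) ^ r = (psi r x ^ r) ^ t" using x
      by (simp add: chi0_def power_mult[symmetric] mult.commute)
    thus "(chi0 x * psi r x ^ t) ^ r = 1" using pr x by simp
  qed
  have nt: "ntriv (\<lambda>x::'a. chi0 x * psi r x ^ t)"
    by (rule ntriv_prod[OF chi0_is c1 pr pn cop assms(3)]) simp
  from good_single[OF ch pw nt, of 1] show ?thesis by simp
qed



definition fr :: "nat \<Rightarrow> 'a::field \<Rightarrow> complex" where
  "fr e x = (if efree e x then 1 else 0)"

lemma theta_nonneg: "theta k \<ge> 0"
  unfolding theta_def by simp

lemma theta_prime: "prime r \<Longrightarrow> theta r = (real r - 1) / real r"
  unfolding theta_def using totient_prime[of r] prime_gt_0_nat[of r] by (simp add: of_nat_diff)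

lemma theta_mult: "coprime a b \<Longrightarrow> theta (a * b) = theta a * theta b"
  unfolding theta_def by (simp add: totient_mult_coprime)

lemma theta_1: "theta 1 = 1" unfolding theta_def by simp

lemma W_1: "W 1 = 1" unfolding W_def by simp

lemma W_mult_prime:
  assumes "prime r" "\<not> r dvd m" "m > 0"
  shows "W (r * m) = 2 * W m"
proof -
  have "prime_factors (r * m) = insert r (prime_factors m)"
    using prime_factors_product[of r m] assms prime_prime_factors[of r] by auto
  moreover have "r \<notin> prime_factors m" using assms(2) by auto
  ultimately show ?thesis unfolding W_def by simp
qed

lemma fr_zero: "fr e (0::'a::field) = 0"
  unfolding fr_def efree_def by simp

lemma expansion:
  fixes k :: nat
  assumes "k > 0" "squarefree k" "\<forall>r. prime r \<and> r dvd k \<longrightarrow> r dvd (CARD('a::{finite,field}) - 1)"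
  shows "\<exists>N. (\<forall>x::'a. fr k x = of_real (theta k) * chi0 x + N x) \<and> good k N (theta k * (real (W k) - 1))"
  using assms
proof (induct k rule: less_induct)
  case (less k)
  show ?case
  proof (cases "k = 1")
    case True
    have "\<forall>x::'a. fr k x = of_real (theta k) * chi0 x + 0"
      unfolding True fr_def chi0_def theta_1 efree_1 by simp
    moreover have "good k (\<lambda>x::'a. 0) (theta k * (real (W k) - 1))"
      unfolding True W_1 by (simp add: good_zero)
    ultimately show ?thesis by (intro exI[of _ "\<lambda>x::'a. 0"]) simp
  next
    case False
    then obtain r where r: "prime r" "r dvd k" using prime_factor_nat by blast
    then obtain m where km: "k = r * m" by blast
    have r1: "r > 1" using r(1) prime_gt_1_nat by blast
    have m0: "m > 0" using less.prems(1) km by (cases "m = 0") auto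
    have rm: "\<not> r dvd m"
    proof
      assume "r dvd m"
      then obtain j where "m = r * j" by blast
      hence "r^2 dvd k" using km by (simp add: power2_eq_square)
      hence "r dvd 1" using squarefreeD[OF less.prems(2)] by blast
      thus False using r1 by simp
    qed
    have mk: "m < k" using km r1 m0 by simp
    have sqm: "squarefree m" using squarefree_mono[OF _ less.prems(2)] km by simp
    have pm: "\<forall>s. prime s \<and> s dvd m \<longrightarrow> s dvd (CARD('a) - 1)"
      using less.prems(3) km by auto
    obtain Nm where Nm: "\<forall>x::'a. fr m x = of_real (theta m) * chi0 x + Nm x"
        "good m Nm (theta m * (real (W m) - 1))"
      using less.hyps[OF mk m0 sqm pm] by blast
    have rq: "r dvd (CARD('a) - 1)" using less.prems(3) r by blast
    have cop: "coprime r m" using prime_imp_coprime[OF r(1) rm] .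
    have thk: "theta k = theta r * theta m" unfolding km by (rule theta_mult[OF cop])
    have thr: "theta r = (real r - 1) / real r" by (rule theta_prime[OF r(1)])
    have Wk: "real (W k) = 2 * real (W m)" unfolding km using W_mult_prime[OF r(1) rm m0] by simp
    define T where "T = {1..<r}"
    have cT: "card T = r - 1" unfolding T_def by simp
    define N where "N = (\<lambda>x::'a. of_real (theta r) * Nm x
       + (\<Sum>t\<in>T. (- of_real (theta m) / of_nat r) * (chi0 x * psi r x ^ t))
       + (\<Sum>t\<in>T. (- 1 / of_nat r) * (Nm x * psi r x ^ t)))"
    have g1: "good k (\<lambda>x::'a. of_real (theta r) * Nm x) (theta r * (theta m * (real (W m) - 1)))"
    proof -
      have "good m (\<lambda>x::'a. of_real (theta r) * Nm x) (norm (complex_of_real (theta r)) * (theta m * (real (W m) - 1)))"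
        by (rule good_scale[OF Nm(2)])
      thus ?thesis by (rule good_mono) (auto simp: km theta_nonneg)
    qed
    have g2: "good k (\<lambda>x::'a. \<Sum>t\<in>T. (- of_real (theta m) / of_nat r) * (chi0 x * psi r x ^ t))
                (\<Sum>t\<in>T. theta m / real r)"
    proof (rule good_sum)
      show "finite T" unfolding T_def by simp
      show "\<forall>t\<in>T. good k (\<lambda>x::'a. (- of_real (theta m) / of_nat r) * (chi0 x * psi r x ^ t)) (theta m / real r)"
      proof
        fix t assume "t \<in> T"
        hence t: "0 < t" "t < r" unfolding T_def by auto
        have G: "good r (\<lambda>x::'a. (- of_real (theta m) / of_nat r) * (chi0 x * psi r x ^ t))
                (norm (- complex_of_real (theta m) / of_nat r) * 1)"
          by (rule good_scale[OF good_chi0_psi[OF r(1) rq t]])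
        have E: "norm (- complex_of_real (theta m) / of_nat r) * 1 = theta m / real r"
          using theta_nonneg[of m] by (simp add: norm_divide)
        show "good k (\<lambda>x::'a. (- of_real (theta m) / of_nat r) * (chi0 x * psi r x ^ t)) (theta m / real r)"
          by (rule good_mono[OF G], simp add: km, simp only: E order_refl)
      qed
    qed
    have g3: "good k (\<lambda>x::'a. \<Sum>t\<in>T. (- 1 / of_nat r) * (Nm x * psi r x ^ t))
                (\<Sum>t\<in>T. theta m * (real (W m) - 1) / real r)"
    proof (rule good_sum)
      show "finite T" unfolding T_def by simp
      show "\<forall>t\<in>T. good k (\<lambda>x::'a. (- 1 / of_nat r) * (Nm x * psi r x ^ t)) (theta m * (real (W m) - 1) / real r)"
      proof
        fix t assume "t \<in> T"
        hence t: "0 < t" "t < r" unfolding T_def by auto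
        have "good (r * m) (\<lambda>x::'a. (- 1 / of_nat r) * (Nm x * psi r x ^ t))
                (norm (- 1 / (of_nat r :: complex)) * (theta m * (real (W m) - 1)))"
          by (rule good_scale[OF good_mul_psi[OF Nm(2) r(1) rq rm m0 t]])
        moreover have "norm (- 1 / (of_nat r :: complex)) * (theta m * (real (W m) - 1)) = theta m * (real (W m) - 1) / real r"
          by (simp add: norm_divide)
        ultimately show "good k (\<lambda>x::'a. (- 1 / of_nat r) * (Nm x * psi r x ^ t)) (theta m * (real (W m) - 1) / real r)"
          by (simp add: km)
      qed
    qed
    have gN: "good k N (theta k * (real (W k) - 1))"
    proof -
      have G: "good k N (theta r * (theta m * (real (W m) - 1)) + (\<Sum>t\<in>T. theta m / real r)
                      + (\<Sum>t\<in>T. theta m * (real (W m) - 1) / real r))"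
        unfolding N_def by (intro good_add g1 g2 g3)
      have E: "theta r * (theta m * (real (W m) - 1)) + (\<Sum>t\<in>T. theta m / real r)
                      + (\<Sum>t\<in>T. theta m * (real (W m) - 1) / real r) = theta k * (real (W k) - 1)"
        unfolding thk Wk thr using cT r1 by (simp add: of_nat_diff field_simps)
      show ?thesis by (rule good_mono[OF G], simp, simp only: E order_refl)
    qed
    have eq: "fr k x = of_real (theta k) * chi0 x + N x" for x :: 'a
    proof (cases "x = 0")
      case True
      have "Nm 0 = 0" using Nm(1) fr_zero[where 'a='a, of m] by (simp add: chi0_def)
      thus ?thesis using True by (simp add: N_def fr_zero chi0_def psi_def)
    next
      case x: False
      define P where "P = (if \<exists>b. x = b ^ r then 1 else (0::complex))"
      define S1 where "S1 = (\<Sum>t\<in>T. psi r x ^ t)"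
      have "(\<Sum>t<r. psi r x ^ t) = of_nat r * P"
        using psi_sum[OF rq _ x] r1 by (simp add: P_def)
      moreover have "(\<Sum>t<r. psi r x ^ t) = 1 + S1"
      proof -
        have "{..<r} = insert 0 T" unfolding T_def using r1 by auto
        thus ?thesis unfolding S1_def T_def by simp
      qed
      ultimately have PS: "P = (1 + S1) / of_nat r" using r1 by (simp add: field_simps)
      have "fr k x = fr m x * (1 - P)"
        unfolding fr_def P_def km efree_step[OF r(1) m0] by auto
      also have "\<dots> = (of_real (theta m) + Nm x) * (of_real (theta r) - S1 / of_nat r)"
        using Nm(1) x r1 unfolding PS thr by (simp add: chi0_def field_simps of_nat_diff)
      also have "\<dots> = of_real (theta k) * chi0 x + N x"
        unfolding N_def thk S1_def using x
        by (simp add: chi0_def sum_distrib_left sum_distrib_right algebra_simps sum_negf sum_divide_distrib add_divide_distrib sum.distrib)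
      finally show ?thesis .
    qed
    show ?thesis using eq gN by blast
  qed
qed



lemma Mcount_sum:
  fixes u v :: "'a::{finite,field}"
  shows "complex_of_nat (Mcount u v e1 e2) = (\<Sum>a\<in>UNIV. fr e1 a * fr e2 (u * a + v * inverse a))"
proof -
  have "{a::'a. a \<noteq> 0 \<and> efree e1 a \<and> u * a + v * inverse a \<noteq> 0 \<and> efree e2 (u * a + v * inverse a)}
      = {a \<in> UNIV. efree e1 a \<and> efree e2 (u * a + v * inverse a)}"
    unfolding efree_def by auto
  hence "complex_of_nat (Mcount u v e1 e2) = of_nat (card {a \<in> UNIV. efree e1 a \<and> efree e2 (u * a + v * inverse a)})"
    unfolding Mcount_def by simp
  also have "\<dots> = (\<Sum>a\<in>{a \<in> UNIV. efree e1 a \<and> efree e2 (u * a + v * inverse a)}. 1)"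
    by simp
  also have "\<dots> = (\<Sum>a\<in>UNIV. if efree e1 a \<and> efree e2 (u * a + v * inverse a) then 1 else 0)"
    by (rule sum.inter_filter) simp
  also have "\<dots> = (\<Sum>a\<in>UNIV. fr e1 a * fr e2 (u * a + v * inverse a))"
    by (rule sum.cong[OF refl]) (simp add: fr_def)
  finally show ?thesis .
qed

lemma vall_sum_bound:
  assumes "\<forall>p\<in>set L. norm (\<Sum>a\<in>A. snd p (H a) * G a) \<le> M"
  shows "norm (\<Sum>a\<in>A. vall L (H a) * G a) \<le> wtl L * M"
  using assms
proof (induct L)
  case Nil thus ?case by simp
next
  case (Cons p L)
  have "(\<Sum>a\<in>A. vall (p # L) (H a) * G a) = fst p * (\<Sum>a\<in>A. snd p (H a) * G a) + (\<Sum>a\<in>A. vall L (H a) * G a)"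
    by (simp add: algebra_simps sum.distrib sum_distrib_left)
  hence "norm (\<Sum>a\<in>A. vall (p # L) (H a) * G a) \<le> norm (fst p) * norm (\<Sum>a\<in>A. snd p (H a) * G a) + norm (\<Sum>a\<in>A. vall L (H a) * G a)"
    by (metis norm_mult norm_triangle_ineq)
  also have "\<dots> \<le> norm (fst p) * M + wtl L * M"
    using Cons by (intro add_mono mult_left_mono) auto
  finally show ?case by (simp add: algebra_simps)
qed

lemma eps_bound:
  fixes u v :: "'a::{finite,field}"
  assumes al: "is_char \<alpha>" and nt: "ntriv \<alpha>" and v: "v \<noteq> 0"
  shows "norm (Ssum \<alpha> chi0 u v) \<le> real (card {x::'a. u * x ^ 2 + v = 0})"
proof -
  define Z where "Z = {x::'a. u * x ^ 2 + v = 0}"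
  have Z: "a \<in> Z \<longleftrightarrow> a \<noteq> 0 \<and> u * a + v * inverse a = 0" for a
  proof
    assume "a \<in> Z"
    hence a: "u * a^2 + v = 0" unfolding Z_def by simp
    hence "a \<noteq> 0" using v by auto
    moreover have "u * a + v * inverse a = (u * a^2 + v) * inverse a" using \<open>a \<noteq> 0\<close>
      by (simp add: field_simps power2_eq_square)
    ultimately show "a \<noteq> 0 \<and> u * a + v * inverse a = 0" using a by simp
  next
    assume a: "a \<noteq> 0 \<and> u * a + v * inverse a = 0"
    have a0: "a \<noteq> 0" using a by simp
    have "u * a^2 + v = (u * a + v * inverse a) * a" using a0 by (simp add: distrib_right power2_eq_square mult.assoc)
    thus "a \<in> Z" using a unfolding Z_def by simp
  qed
  have "Ssum \<alpha> chi0 u v = (\<Sum>a\<in>UNIV. \<alpha> a - (if a \<in> Z then \<alpha> a else 0))"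
    unfolding Ssum_def
  proof (rule sum.cong[OF refl])
    fix a :: 'a
    show "\<alpha> a * chi0 (u * a + v * inverse a) = \<alpha> a - (if a \<in> Z then \<alpha> a else 0)"
      using Z[of a] is_charD(1)[OF al] by (cases "a = 0") (auto simp: chi0_def)
  qed
  also have "\<dots> = (\<Sum>a\<in>UNIV. \<alpha> a) - (\<Sum>a\<in>Z. \<alpha> a)"
    by (simp add: sum_subtractf sum.inter_filter[symmetric])
  also have "\<dots> = - (\<Sum>a\<in>Z. \<alpha> a)" using sum_ntriv[OF al nt] by simp
  finally have "norm (Ssum \<alpha> chi0 u v) = norm (\<Sum>a\<in>Z. \<alpha> a)" by simp
  also have "\<dots> \<le> (\<Sum>a\<in>Z. norm (\<alpha> a))" by (rule norm_sum)
  also have "\<dots> \<le> (\<Sum>a\<in>Z. 1)" by (rule sum_mono) (rule char_norm_le[OF al])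
  also have "\<dots> = real (card Z)" by simp
  finally show ?thesis unfolding Z_def .
qed

lemma fr_step:
  assumes "prime p" "p dvd (CARD('a::{finite,field}) - 1)" "k > 0"
  shows "fr (p * k) (x::'a) = of_real (theta p) * fr k x - (1 / of_nat p) * (\<Sum>t\<in>{1..<p}. fr k x * psi p x ^ t)"
proof (cases "x = 0")
  case True thus ?thesis by (simp add: fr_zero)
next
  case x: False
  have p1: "p > 1" using assms(1) prime_gt_1_nat by blast
  define P where "P = (if \<exists>b. x = b ^ p then 1 else (0::complex))"
  define S1 where "S1 = (\<Sum>t\<in>{1..<p}. psi p x ^ t)"
  have "(\<Sum>t<p. psi p x ^ t) = of_nat p * P"
    using psi_sum[OF assms(2) _ x] p1 by (simp add: P_def)
  moreover have "(\<Sum>t<p. psi p x ^ t) = 1 + S1"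
  proof -
    have "{..<p} = insert 0 {1..<p}" using p1 by auto
    thus ?thesis unfolding S1_def by simp
  qed
  ultimately have PS: "P = (1 + S1) / of_nat p" using p1 by (simp add: field_simps)
  have "fr (p * k) x = fr k x * (1 - P)"
    unfolding fr_def P_def efree_step[OF assms(1,3)] by auto
  also have "\<dots> = of_real (theta p) * fr k x - (1 / of_nat p) * (fr k x * S1)"
    unfolding PS theta_prime[OF assms(1)] using p1 by (simp add: field_simps of_nat_diff)
  also have "fr k x * S1 = (\<Sum>t\<in>{1..<p}. fr k x * psi p x ^ t)"
    unfolding S1_def by (simp add: sum_distrib_left)
  finally show ?thesis .
qed



locale mainctx =
  fixes u v :: "'a::{finite,field}" and k p :: nat and L :: "(complex \<times> ('a \<Rightarrow> complex)) list"
  assumes u: "u \<noteq> 0" and v: "v \<noteq> 0" and k0: "k > 0"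
    and p: "prime p" and pq: "p dvd (CARD('a) - 1)" and pk: "\<not> p dvd k"
    and frL: "\<forall>x. fr k x = vall ((complex_of_real (theta k), chi0) # L) x"
    and exL: "exl k L" and ntL: "ntl L" and wtL: "wtl L \<le> theta k * (real (W k) - 1)"
begin

abbreviation "L0 \<equiv> (complex_of_real (theta k), chi0) # L"
abbreviation "B \<equiv> (\<lambda>a. u * a + v * inverse a)"

lemma exL0: "exl k L0"
  using exL unfolding exl_def by (auto simp: chi0_is chi0_def)

lemma wtL0: "wtl L0 \<le> theta k * real (W k)"
  using wtL theta_nonneg[of k] by (simp add: algebra_simps)

lemma wtL_nonneg: "0 \<le> wtl L" by (rule wtl_nonneg)

lemma psi_facts:
  shows "is_char (psi p :: 'a \<Rightarrow> complex)" "\<forall>x::'a. x \<noteq> 0 \<longrightarrow> psi p x ^ p = 1" "ntriv (psi p :: 'a \<Rightarrow> complex)"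
proof -
  have p0: "p > 0" using p prime_gt_0_nat by blast
  show "is_char (psi p :: 'a \<Rightarrow> complex)" by (rule psi_is_char[OF pq p0])
  show "\<forall>x::'a. x \<noteq> 0 \<longrightarrow> psi p x ^ p = 1" using psi_pow_r p0 by blast
  show "ntriv (psi p :: 'a \<Rightarrow> complex)" by (rule psi_ntriv[OF pq p])
qed

lemma twist:
  assumes "q1 \<in> set L0" "0 < t" "t < p"
  shows "is_char (\<lambda>a. snd q1 a * psi p a ^ t)" "ntriv (\<lambda>a. snd q1 a * psi p a ^ t)"
proof -
  have c: "is_char (snd q1)" "\<forall>x. x \<noteq> 0 \<longrightarrow> snd q1 x ^ k = 1" using exL0 assms(1) unfolding exl_def by auto
  show "is_char (\<lambda>a. snd q1 a * psi p a ^ t)"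
    by (rule char_mult_is[OF c(1) char_pow_is[OF psi_facts(1) assms(2)]])
  have cop: "coprime (t * k) p"
  proof -
    have "\<not> p dvd t" using assms(2,3) by (auto dest: dvd_imp_le)
    hence "\<not> p dvd t * k" using pk p by (simp add: prime_dvd_mult_iff)
    hence "coprime p (t * k)" by (rule prime_imp_coprime[OF p])
    thus ?thesis by (metis coprime_commute)
  qed
  show "ntriv (\<lambda>a. snd q1 a * psi p a ^ t)"
    by (rule ntriv_prod[OF c psi_facts(2,3) cop assms(2) k0])
qed

lemma L0_char: "q1 \<in> set L0 \<Longrightarrow> is_char (snd q1)"
  using exL0 unfolding exl_def by auto

lemma L_char: "q2 \<in> set L \<Longrightarrow> is_char (snd q2) \<and> ntriv (snd q2)"
  using exL ntL unfolding exl_def ntl_def by auto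

lemma frE: "fr k x = vall L0 x" using frL by blast

lemma frE2: "fr k x = complex_of_real (theta k) * chi0 x + vall L x" using frL by simp

lemma W_ge1: "real (W k) \<ge> 1" unfolding W_def by simp

definition eps where "eps = real (card {x::'a. u * x ^ 2 + v = 0})"
definition sq where "sq = sqrt (real (CARD('a)))"

lemma bound_i:
  assumes "0 < t" "t < p"
  shows "norm (\<Sum>a\<in>UNIV. fr k a * psi p a ^ t * fr k (B a))
     \<le> theta k ^ 2 * (2 * sq * (real (W k) ^ 2 - real (W k)) + eps * real (W k))"
proof -
  define th where "th = theta k"
  define Wr where "Wr = real (W k)"
  have th0: "th \<ge> 0" unfolding th_def by (rule theta_nonneg)
  have sq0: "sq \<ge> 0" unfolding sq_def by simp
  have eps0: "eps \<ge> 0" unfolding eps_def by simp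
  have split: "(\<Sum>a\<in>UNIV. fr k a * psi p a ^ t * fr k (B a))
      = complex_of_real th * (\<Sum>a\<in>UNIV. vall L0 a * (psi p a ^ t * chi0 (B a)))
        + (\<Sum>a\<in>UNIV. vall L (B a) * (fr k a * psi p a ^ t))"
  proof -
    have pt: "fr k a * psi p a ^ t * fr k (B a)
       = complex_of_real th * (vall L0 a * (psi p a ^ t * chi0 (B a))) + vall L (B a) * (fr k a * psi p a ^ t)" for a
    proof -
      have e1: "fr k (B a) = complex_of_real th * chi0 (B a) + vall L (B a)" unfolding th_def by (rule frE2)
      have e2: "vall L0 a = fr k a" by (rule frE[symmetric])
      show ?thesis unfolding e1 e2 by (simp add: algebra_simps)
    qed
    show ?thesis unfolding pt sum.distrib sum_distrib_left ..
  qed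
  have b1: "norm (\<Sum>a\<in>UNIV. vall L0 a * (psi p a ^ t * chi0 (B a))) \<le> wtl L0 * eps"
  proof (rule vall_sum_bound[where H="\<lambda>a. a", simplified], intro ballI)
    fix q1 assume q1: "q1 \<in> set L0"
    have "(\<Sum>a\<in>UNIV. snd q1 a * (psi p a ^ t * chi0 (B a))) = Ssum (\<lambda>a. snd q1 a * psi p a ^ t) chi0 u v"
      unfolding Ssum_def by (simp add: mult_ac)
    also have "norm \<dots> \<le> eps" unfolding eps_def
      by (rule eps_bound[OF twist[OF q1 assms] v])
    finally show "norm (\<Sum>a\<in>UNIV. snd q1 a * (psi p a ^ t * chi0 (B a))) \<le> eps" .
  qed
  have b2: "norm (\<Sum>a\<in>UNIV. vall L (B a) * (fr k a * psi p a ^ t)) \<le> wtl L * (wtl L0 * (2 * sq))"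
  proof (rule vall_sum_bound, intro ballI)
    fix q2 assume q2: "q2 \<in> set L"
    have "(\<Sum>a\<in>UNIV. snd q2 (B a) * (fr k a * psi p a ^ t)) = (\<Sum>a\<in>UNIV. vall L0 a * (psi p a ^ t * snd q2 (B a)))"
      unfolding frE by (simp only: mult_ac)
    also have "norm \<dots> \<le> wtl L0 * (2 * sq)"
    proof (rule vall_sum_bound[where H="\<lambda>a. a", simplified], intro ballI)
      fix q1 assume q1: "q1 \<in> set L0"
      have "(\<Sum>a\<in>UNIV. snd q1 a * (psi p a ^ t * snd q2 (B a))) = Ssum (\<lambda>a. snd q1 a * psi p a ^ t) (snd q2) u v"
        unfolding Ssum_def by (simp add: mult_ac)
      also have "norm \<dots> \<le> 2 * sq" unfolding sq_def
        using core_bound[OF twist(1)[OF q1 assms] conjunct1[OF L_char[OF q2]] conjunct2[OF L_char[OF q2]] u v] .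
      finally show "norm (\<Sum>a\<in>UNIV. snd q1 a * (psi p a ^ t * snd q2 (B a))) \<le> 2 * sq" .
    qed
    finally show "norm (\<Sum>a\<in>UNIV. snd q2 (B a) * (fr k a * psi p a ^ t)) \<le> wtl L0 * (2 * sq)" .
  qed
  have "norm (\<Sum>a\<in>UNIV. fr k a * psi p a ^ t * fr k (B a))
      \<le> norm (complex_of_real th * (\<Sum>a\<in>UNIV. vall L0 a * (psi p a ^ t * chi0 (B a))))
        + norm (\<Sum>a\<in>UNIV. vall L (B a) * (fr k a * psi p a ^ t))"
    unfolding split by (rule norm_triangle_ineq)
  also have "norm (complex_of_real th * (\<Sum>a\<in>UNIV. vall L0 a * (psi p a ^ t * chi0 (B a))))
      = th * norm (\<Sum>a\<in>UNIV. vall L0 a * (psi p a ^ t * chi0 (B a)))"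
    using th0 by (simp add: norm_mult)
  also have "th * norm (\<Sum>a\<in>UNIV. vall L0 a * (psi p a ^ t * chi0 (B a)))
        + norm (\<Sum>a\<in>UNIV. vall L (B a) * (fr k a * psi p a ^ t))
      \<le> th * (wtl L0 * eps) + wtl L * (wtl L0 * (2 * sq))"
    by (rule add_mono[OF mult_left_mono[OF b1 th0] b2])
  also have "\<dots> \<le> th * ((th * Wr) * eps) + (th * (Wr - 1)) * ((th * Wr) * (2 * sq))"
  proof (rule add_mono)
    have w0: "wtl L0 \<le> th * Wr" using wtL0 unfolding th_def Wr_def .
    have w1: "wtl L \<le> th * (Wr - 1)" using wtL unfolding th_def Wr_def .
    have Wr1: "Wr \<ge> 1" unfolding Wr_def by (rule W_ge1)
    show "th * (wtl L0 * eps) \<le> th * ((th * Wr) * eps)"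
      by (rule mult_left_mono[OF mult_right_mono[OF w0 eps0] th0])
    have "0 \<le> th * (Wr - 1)" using th0 Wr1 by simp
    moreover have "0 \<le> wtl L0 * (2 * sq)" using wtl_nonneg[of L0] sq0 by simp
    ultimately show "wtl L * (wtl L0 * (2 * sq)) \<le> (th * (Wr - 1)) * ((th * Wr) * (2 * sq))"
      using mult_mono[OF w1 mult_right_mono[OF w0, of "2 * sq"]] sq0 by simp
  qed
  also have "\<dots> = theta k ^ 2 * (2 * sq * (real (W k) ^ 2 - real (W k)) + eps * real (W k))"
    unfolding th_def Wr_def by (simp add: algebra_simps power2_eq_square)
  finally show ?thesis .
qed

lemma bound_ii:
  assumes "0 < t" "t < p"
  shows "norm (\<Sum>a\<in>UNIV. fr k a * (fr k (B a) * psi p (B a) ^ t))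
     \<le> (theta k * real (W k)) * ((theta k * real (W k)) * (2 * sq))"
proof -
  have sq0: "sq \<ge> 0" unfolding sq_def by simp
  have "norm (\<Sum>a\<in>UNIV. vall L0 a * (fr k (B a) * psi p (B a) ^ t)) \<le> wtl L0 * (wtl L0 * (2 * sq))"
  proof (rule vall_sum_bound[where H="\<lambda>a. a", simplified], intro ballI)
    fix q1 assume q1: "q1 \<in> set L0"
    have "(\<Sum>a\<in>UNIV. snd q1 a * (fr k (B a) * psi p (B a) ^ t)) = (\<Sum>a\<in>UNIV. vall L0 (B a) * (psi p (B a) ^ t * snd q1 a))"
      unfolding frE by (simp only: mult_ac)
    also have "norm \<dots> \<le> wtl L0 * (2 * sq)"
    proof (rule vall_sum_bound, intro ballI)
      fix q2 assume q2: "q2 \<in> set L0"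
      have "(\<Sum>a\<in>UNIV. snd q2 (B a) * (psi p (B a) ^ t * snd q1 a)) = Ssum (snd q1) (\<lambda>y. snd q2 y * psi p y ^ t) u v"
        unfolding Ssum_def by (simp add: mult_ac)
      also have "norm \<dots> \<le> 2 * sq" unfolding sq_def
        using core_bound[OF L0_char[OF q1] twist[OF q2 assms] u v] .
      finally show "norm (\<Sum>a\<in>UNIV. snd q2 (B a) * (psi p (B a) ^ t * snd q1 a)) \<le> 2 * sq" .
    qed
    finally show "norm (\<Sum>a\<in>UNIV. snd q1 a * (fr k (B a) * psi p (B a) ^ t)) \<le> wtl L0 * (2 * sq)" .
  qed
  hence "norm (\<Sum>a\<in>UNIV. fr k a * (fr k (B a) * psi p (B a) ^ t)) \<le> wtl L0 * (wtl L0 * (2 * sq))"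
    unfolding frE[of a for a] .
  also have "\<dots> \<le> (theta k * real (W k)) * ((theta k * real (W k)) * (2 * sq))"
  proof -
    have "0 \<le> theta k * real (W k)" using theta_nonneg[of k] by simp
    moreover have "0 \<le> wtl L0 * (2 * sq)" using wtl_nonneg[of L0] sq0 by simp
    ultimately show ?thesis using mult_mono[OF wtL0 mult_right_mono[OF wtL0, of "2 * sq"]] sq0 by simp
  qed
  finally show ?thesis .
qed

end



lemma diff_bound:
  fixes F G :: "'a::finite \<Rightarrow> complex" and H :: "nat \<Rightarrow> 'a \<Rightarrow> complex"
  assumes "\<And>a. F a = c * G a - (1 / of_nat p) * (\<Sum>t\<in>{1..<p}. H t a)"
    and "p > 0" and "\<And>t. t \<in> {1..<p} \<Longrightarrow> norm (\<Sum>a\<in>UNIV. H t a) \<le> Bd"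
  shows "norm ((\<Sum>a\<in>UNIV. F a) - c * (\<Sum>a\<in>UNIV. G a)) \<le> (1 - 1 / real p) * Bd"
proof -
  have sw: "(\<Sum>a\<in>UNIV. \<Sum>t\<in>{1..<p}. H t a) = (\<Sum>t\<in>{1..<p}. \<Sum>a\<in>UNIV. H t a)"
    by (rule sum.swap)
  have "(\<Sum>a\<in>UNIV. F a) = c * (\<Sum>a\<in>UNIV. G a) - (1 / of_nat p) * (\<Sum>a\<in>UNIV. \<Sum>t\<in>{1..<p}. H t a)"
    unfolding assms(1) by (simp only: sum_subtractf sum_distrib_left)
  hence "(\<Sum>a\<in>UNIV. F a) - c * (\<Sum>a\<in>UNIV. G a) = - ((1 / of_nat p) * (\<Sum>t\<in>{1..<p}. \<Sum>a\<in>UNIV. H t a))"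
    unfolding sw by simp
  hence "norm ((\<Sum>a\<in>UNIV. F a) - c * (\<Sum>a\<in>UNIV. G a)) = (1 / real p) * norm (\<Sum>t\<in>{1..<p}. \<Sum>a\<in>UNIV. H t a)"
    by (simp add: norm_mult norm_divide)
  also have "\<dots> \<le> (1 / real p) * (\<Sum>t\<in>{1..<p}. norm (\<Sum>a\<in>UNIV. H t a))"
    by (intro mult_left_mono norm_sum) simp
  also have "\<dots> \<le> (1 / real p) * (\<Sum>t\<in>{1..<p}. Bd)"
    by (intro mult_left_mono sum_mono assms(3)) auto
  also have "\<dots> = (1 - 1 / real p) * Bd"
    using assms(2) by (simp add: of_nat_diff field_simps)
  finally show ?thesis .
qed

lemma real_abs_as_norm:
  "\<bar>real m1 - th * real m2\<bar> = norm (complex_of_nat m1 - complex_of_real th * complex_of_nat m2)"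
proof -
  have "complex_of_nat m1 - complex_of_real th * complex_of_nat m2 = complex_of_real (real m1 - th * real m2)"
    by simp
  thus ?thesis by (simp only: norm_of_real)
qed

theorem lemma6p3:
  fixes u v :: "'a::{finite,field}"
    and k :: nat and ps :: "nat list" and i :: nat
  assumes "u \<noteq> 0" and "v \<noteq> 0"
    and "distinct ps" and "\<forall>p\<in>set ps. prime p"
    and "Rad (card (UNIV::'a set) - 1) = k * prod_list ps"
    and "i < length ps"
  shows "(\<bar>real (Mcount u v (ps ! i * k) k) - theta (ps ! i) * real (Mcount u v k k)\<bar>
           \<le> theta k ^ 2 * (1 - 1 / real (ps ! i)) *
             (2 * sqrt (real (card (UNIV::'a set))) * (real (W k) ^ 2 - real (W k))
              + real (card {x::'a. u * x ^ 2 + v = 0}) * real (W k))) \<and>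
         (\<bar>real (Mcount u v k (ps ! i * k)) - theta (ps ! i) * real (Mcount u v k k)\<bar>
           \<le> 2 * (1 - 1 / real (ps ! i)) * theta k ^ 2 * real (W k) ^ 2 * sqrt (real (card (UNIV::'a set))))"
proof -
  define n where "n = CARD('a) - 1"
  define p where "p = ps ! i"
  have n0: "n \<noteq> 0" unfolding n_def using card_ge2[where 'a='a] by simp
  have pp: "prime p" using assms(4,6) unfolding p_def by simp
  have sqR: "squarefree (Rad n)"
    unfolding Rad_def
  proof (rule squarefree_prod_coprime)
    fix a b assume "a \<in> prime_factors n" "b \<in> prime_factors n" "a \<noteq> b"
    thus "coprime a b" by (intro primes_coprime) (auto dest: in_prime_factors_imp_prime)
  next
    fix a assume "a \<in> prime_factors n"
    thus "squarefree a" by (intro squarefree_prime) (auto dest: in_prime_factors_imp_prime)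
  qed
  have R: "Rad n = k * prod_list ps" using assms(5) unfolding n_def by simp
  have sqkp: "squarefree (k * prod_list ps)" using sqR R by simp
  have sqk: "squarefree k" using squarefree_multD(1)[OF sqkp] .
  have k0: "k > 0" using sqk by (cases "k = 0") auto
  have divR: "s dvd n" if "prime s" "s dvd Rad n" for s
  proof -
    from that have "\<exists>x\<in>prime_factors n. s dvd x" unfolding Rad_def by (simp add: prime_dvd_prod_iff)
    then obtain x where x: "x \<in> prime_factors n" "s dvd x" by blast
    have "s = x" using primes_dvd_imp_eq[OF that(1) _ x(2)] x(1) by auto
    thus ?thesis using x(1) by auto
  qed
  have kdiv: "\<forall>s. prime s \<and> s dvd k \<longrightarrow> s dvd (CARD('a) - 1)"
    using divR R unfolding n_def by (metis dvd_mult2)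
  have pdvd: "p dvd prod_list ps" unfolding p_def using assms(6) by (intro prod_list_dvd) simp
  have pq: "p dvd (CARD('a) - 1)"
    using divR[OF pp] R pdvd unfolding n_def by (metis dvd_mult)
  have pk: "\<not> p dvd k"
  proof
    assume "p dvd k"
    hence "p^2 dvd k * prod_list ps" using pdvd by (simp add: power2_eq_square mult_dvd_mono)
    hence "p dvd 1" using squarefreeD[OF sqkp] by blast
    thus False using pp by simp
  qed
  obtain N where N: "\<forall>x::'a. fr k x = of_real (theta k) * chi0 x + N x" "good k N (theta k * (real (W k) - 1))"
    using expansion[OF k0 sqk kdiv] by blast
  obtain L where L: "exl k L" "ntl L" "\<forall>x. N x = vall L x" "wtl L \<le> theta k * (real (W k) - 1)"
    using N(2) unfolding good_def by blast
  have frL: "\<forall>x::'a. fr k x = vall ((complex_of_real (theta k), chi0) # L) x"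
    using N(1) L(3) by simp
  interpret mainctx u v k p L
    by unfold_locales (use assms(1,2) k0 pp pq pk frL L in auto)
  have p0: "p > 0" using pp prime_gt_0_nat by blast
  have part1: "\<bar>real (Mcount u v (p * k) k) - theta p * real (Mcount u v k k)\<bar>
      \<le> (1 - 1 / real p) * (theta k ^ 2 * (2 * sq * (real (W k) ^ 2 - real (W k)) + eps * real (W k)))"
    unfolding real_abs_as_norm Mcount_sum
  proof (rule diff_bound[where H="\<lambda>t a. fr k a * psi p a ^ t * fr k (u * a + v * inverse a)"])
    fix a :: 'a
    show "fr (p * k) a * fr k (u * a + v * inverse a)
        = complex_of_real (theta p) * (fr k a * fr k (u * a + v * inverse a))
          - 1 / of_nat p * (\<Sum>t\<in>{1..<p}. fr k a * psi p a ^ t * fr k (u * a + v * inverse a))"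
      unfolding fr_step[OF pp pq k0] by (simp add: algebra_simps sum_distrib_right sum_distrib_left)
  next
    fix t assume "t \<in> {1..<p}"
    thus "norm (\<Sum>a\<in>UNIV. fr k a * psi p a ^ t * fr k (u * a + v * inverse a))
        \<le> theta k ^ 2 * (2 * sq * (real (W k) ^ 2 - real (W k)) + eps * real (W k))"
      using bound_i by auto
  qed (rule p0)
  have part2: "\<bar>real (Mcount u v k (p * k)) - theta p * real (Mcount u v k k)\<bar>
      \<le> (1 - 1 / real p) * ((theta k * real (W k)) * ((theta k * real (W k)) * (2 * sq)))"
    unfolding real_abs_as_norm Mcount_sum
  proof (rule diff_bound[where H="\<lambda>t a. fr k a * (fr k (u * a + v * inverse a) * psi p (u * a + v * inverse a) ^ t)"])
    fix a :: 'a
    show "fr k a * fr (p * k) (u * a + v * inverse a)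
        = complex_of_real (theta p) * (fr k a * fr k (u * a + v * inverse a))
          - 1 / of_nat p * (\<Sum>t\<in>{1..<p}. fr k a * (fr k (u * a + v * inverse a) * psi p (u * a + v * inverse a) ^ t))"
      unfolding fr_step[OF pp pq k0] by (simp add: algebra_simps sum_distrib_left)
  next
    fix t assume "t \<in> {1..<p}"
    thus "norm (\<Sum>a\<in>UNIV. fr k a * (fr k (u * a + v * inverse a) * psi p (u * a + v * inverse a) ^ t))
        \<le> (theta k * real (W k)) * ((theta k * real (W k)) * (2 * sq))"
      using bound_ii by auto
  qed (rule p0)
  have eq1: "theta k ^ 2 * (1 - 1 / real p) *
             (2 * sqrt (real (card (UNIV::'a set))) * (real (W k) ^ 2 - real (W k))
              + real (card {x::'a. u * x ^ 2 + v = 0}) * real (W k))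
      = (1 - 1 / real p) * (theta k ^ 2 * (2 * sq * (real (W k) ^ 2 - real (W k)) + eps * real (W k)))"
    unfolding sq_def eps_def by (simp only: mult_ac)
  have eq2: "2 * (1 - 1 / real p) * theta k ^ 2 * real (W k) ^ 2 * sqrt (real (card (UNIV::'a set)))
      = (1 - 1 / real p) * ((theta k * real (W k)) * ((theta k * real (W k)) * (2 * sq)))"
    unfolding sq_def by (simp add: power2_eq_square mult_ac)
  show ?thesis
    unfolding p_def[symmetric] eq1 eq2 using part1 part2 by blast
qed


end
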